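(* Let $K$ be a semifield and $P$ a polygon. Let $d_1,\dots,d_m$ be pairwise non-crossing internal diagonals of $P$ dividing $P$ into subpolygons $P_1,\dots,P_{m+1}$, and let $D_i$ be a dissection of $P_i$ for each $i$. Then the disjoint union $D = \{d_1,\dots,d_m\} \cup D_1 \cup \dots \cup D_{m+1}$ is a dissection of $P$. Moreover, let $f_i : \operatorname{diag}(P_i) \to K$ be a weak frieze with respect to $D_i$ for each $i$, and assume that whenever $P_i$ and $P_j$ share a diagonal $d$ (necessarily an edge of both), $f_i(d) = f_j(d)$. Then there is a unique weak frieze $f : \operatorname{diag}(P) \to K$ with respect to $D$ such that $f|_{\operatorname{diag}(P_i)} = f_i$ for each $i$.
   Context: A semifield is a set $K$ with binary operations $+$ and $\cdot$ such that $+$ is associative and commutative, $(K,\cdot)$ is a commutative group, and $\cdot$ distributes over $+$; no subtraction is assumed. A polygon is a finite set $V$ of at least three vertices with a cyclic order (pictured as a convex polygon in the plane). A diagonal is a two-element subset of $V$ (edges $\{\alpha,\alpha^+\}$, $\alpha^+$ the successor, count as diagonals); $\operatorname{diag}(P)$ is the set of diagonals; non-edges are internal diagonals. $\{\alpha,\beta\}$ and $\{\gamma,\delta\}$ cross if $\alpha,\beta,\gamma,\delta$ are four distinct vertices appearing in the cyclic order as $\alpha,\gamma,\beta,\delta$ or $\alpha,\delta,\beta,\gamma$. A subpolygon is a subset of $V$ of at least three vertices with the induced cyclic order; its diagonals are diagonals of $P$. A dissection is a (possibly empty) set of pairwise non-crossing internal diagonals. Write $f(\alpha,\beta):=f(\{\alpha,\beta\})$.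 A map $f:\operatorname{diag}(P)\to K$ is a weak frieze with respect to a dissection $D$ if $f(\alpha,\beta)f(\gamma,\delta) = f(\alpha,\gamma)f(\beta,\delta) + f(\alpha,\delta)f(\beta,\gamma)$ whenever $\{\alpha,\beta\}$, $\{\gamma,\delta\}$ are crossing diagonals with $\{\gamma,\delta\} \in D$. *)

theory Defs
  imports "HOL-Library.FuncSet"
begin

class semifield = ab_semigroup_add + comm_monoid_mult + inverse +
  assumes semifield_left_inverse: "inverse a * a = 1"
  and semifield_distrib: "(a + b) * c = a * c + b * c"

text \<open>A polygon is a finite set V of natural numbers with at least three elements;
  its cyclic order is the one induced by the order on nat (closing up from Max V to Min V).
  Every finite cyclically ordered set is isomorphic to such a set, and subpolygons
  (subsets with the induced cyclic order) are again of this form.\<close>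
definition polygon :: "nat set \<Rightarrow> bool" where
  "polygon V \<longleftrightarrow> finite V \<and> card V \<ge> 3"

definition subpolygon :: "nat set \<Rightarrow> nat set \<Rightarrow> bool" where
  "subpolygon S V \<longleftrightarrow> S \<subseteq> V \<and> card S \<ge> 3"

definition diags :: "nat set \<Rightarrow> nat set set" where
  "diags V = {{a, b} | a b. a \<in> V \<and> b \<in> V \<and> a \<noteq> b}"

text \<open>Edges: {a, a+} with a+ the cyclic successor of a in V, i.e. one of the two
  arcs between a and b contains no vertex of V.\<close>
definition is_edge :: "nat set \<Rightarrow> nat set \<Rightarrow> bool" where
  "is_edge V d \<longleftrightarrow> (\<exists>a b. a \<in> V \<and> b \<in> V \<and> a < b \<and> d = {a, b} \<and>
      ({x \<in> V. a < x \<and> x < b} = {} \<or> {x \<in> V. x < a \<or> b < x} = {}))"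

definition internal_diags :: "nat set \<Rightarrow> nat set set" where
  "internal_diags V = {d \<in> diags V. \<not> is_edge V d}"

text \<open>Two diagonals cross iff their four endpoints are distinct and interleave in the
  cyclic order.\<close>
definition crosses :: "nat set \<Rightarrow> nat set \<Rightarrow> bool" where
  "crosses d e \<longleftrightarrow> (\<exists>a b c x. d = {a, b} \<and> e = {c, x} \<and> a < c \<and> c < b \<and> (x < a \<or> b < x))"

definition dissection :: "nat set \<Rightarrow> nat set set \<Rightarrow> bool" where
  "dissection V D \<longleftrightarrow> D \<subseteq> internal_diags V \<and> (\<forall>d\<in>D. \<forall>e\<in>D. \<not> crosses d e)"

definition weak_frieze :: "nat set \<Rightarrow> nat set set \<Rightarrow> (nat set \<Rightarrow> 'k::semifield) \<Rightarrow> bool" where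
  "weak_frieze V D f \<longleftrightarrow>
     (\<forall>a b c x. a \<in> V \<longrightarrow> b \<in> V \<longrightarrow> c \<in> V \<longrightarrow> x \<in> V \<longrightarrow>
        crosses {a, b} {c, x} \<longrightarrow> {c, x} \<in> D \<longrightarrow>
        f {a, b} * f {c, x} = f {a, c} * f {b, x} + f {a, x} * f {b, c})"

text \<open>The subpolygons into which a set E of pairwise non-crossing internal diagonals
  divides V: subpolygons all of whose edges are edges of V or diagonals in E, and
  containing no diagonal of E in their interior.\<close>
definition cells :: "nat set \<Rightarrow> nat set set \<Rightarrow> nat set set" where
  "cells V E = {S. subpolygon S V \<and> (\<forall>e. is_edge S e \<longrightarrow> is_edge V e \<or> e \<in> E)
                   \<and> (\<forall>e\<in>E. e \<notin> internal_diags S)}"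

end

theory Submission
  imports Defs
begin

context semifield begin
subclass comm_semiring
  by unfold_locales (rule semifield_distrib)
end

lemma sf_cancel:
  fixes a b e :: "'k::semifield"
  assumes "a * e = b * e" shows "a = b"
proof -
  have ei: "e * inverse e = 1" using semifield_left_inverse[of e] by (simp add: mult.commute)
  have "a = a * (e * inverse e)" using ei by simp
  also have "\<dots> = (a*e) * inverse e" by (simp add: mult.assoc)
  also have "\<dots> = (b*e) * inverse e" using assms by simp
  also have "\<dots> = b" using ei by (simp add: mult.assoc)
  finally show ?thesis .
qed

definition rel :: "(nat \<Rightarrow> nat \<Rightarrow> 'k::semifield) \<Rightarrow> nat \<Rightarrow> nat \<Rightarrow> nat \<Rightarrow> nat \<Rightarrow> bool" where
  "rel F a b p q \<longleftrightarrow> F a b * F p q = F a p * F b q + F a q * F b p"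

lemma rel_swap1:
  assumes "\<And>u v. F u v = F v u" "rel F a b p q" shows "rel F b a p q"
  using assms unfolding rel_def by (metis add.commute mult.commute)

lemma rel_swap2:
  assumes "\<And>u v. F u v = F v u" "rel F a b p q" shows "rel F a b q p"
  using assms unfolding rel_def by (metis add.commute mult.commute)

lemma alg_full:
  assumes sym: "\<And>u v. F u v = F v u"
  and H1: "rel F i c p q" and H2: "rel F i x p q" and H3: "rel F i w c x"
  and H4: "rel F q w c x" and H5: "rel F p w c x"
  shows "rel F i w p q"
proof -
  have H4': "F w q * F c x = F c q * F w x + F x q * F w c"
    using H4 sym[of q] unfolding rel_def by metis
  have H5': "F w p * F c x = F c p * F w x + F x p * F w c"
    using H5 sym[of p] unfolding rel_def by metis
  have "(F i w * F p q) * F c x = (F i w * F c x) * F p q" by (simp add: ac_simps)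
  also have "\<dots> = F w x * (F i c * F p q) + F w c * (F i x * F p q)"
    using H3 unfolding rel_def by (simp add: algebra_simps)
  also have "\<dots> = F w x * (F i p * F c q + F i q * F c p) + F w c * (F i p * F x q + F i q * F x p)"
    using H1 H2 unfolding rel_def by simp
  also have "\<dots> = F i p * (F c q * F w x + F x q * F w c) + F i q * (F c p * F w x + F x p * F w c)"
    by (simp add: algebra_simps)
  also have "\<dots> = (F i p * F w q + F i q * F w p) * F c x"
    unfolding H4'[symmetric] H5'[symmetric] by (simp add: algebra_simps)
  finally show ?thesis unfolding rel_def by (rule sf_cancel)
qed

lemma alg_pc:
  assumes sym: "\<And>u v. F u v = F v u"
  and H2: "rel F i x c q" and H3: "rel F i w c x" and H4: "rel F q w c x"
  shows "rel F i w c q"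
proof -
  have H4': "F w q * F c x = F c q * F w x + F x q * F w c"
    using H4 sym[of q] unfolding rel_def by metis
  have "(F i w * F c q) * F c x = (F i w * F c x) * F c q" by (simp add: ac_simps)
  also have "\<dots> = F w x * (F i c * F c q) + F w c * (F i x * F c q)"
    using H3 unfolding rel_def by (simp add: algebra_simps)
  also have "\<dots> = F w x * (F i c * F c q) + F w c * (F i c * F x q + F i q * F x c)"
    using H2 unfolding rel_def by simp
  also have "\<dots> = F i c * (F c q * F w x + F x q * F w c) + F i q * F w c * F c x"
    using sym[of x c] by (simp add: algebra_simps)
  also have "\<dots> = (F i c * F w q + F i q * F w c) * F c x"
    unfolding H4'[symmetric] by (simp add: algebra_simps)
  finally show ?thesis unfolding rel_def by (rule sf_cancel)
qed

lemma alg_qx: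
  assumes sym: "\<And>u v. F u v = F v u"
  and H1: "rel F i c p x" and H3: "rel F i w c x" and H5: "rel F p w c x"
  shows "rel F i w p x"
proof -
  have H5': "F w p * F c x = F c p * F w x + F x p * F w c"
    using H5 sym[of p] unfolding rel_def by metis
  have "(F i w * F p x) * F c x = (F i w * F c x) * F p x" by (simp add: ac_simps)
  also have "\<dots> = F w x * (F i c * F p x) + F w c * (F i x * F p x)"
    using H3 unfolding rel_def by (simp add: algebra_simps)
  also have "\<dots> = F w x * (F i p * F c x + F i x * F c p) + F w c * (F i x * F p x)"
    using H1 unfolding rel_def by simp
  also have "\<dots> = F i p * F w x * F c x + F i x * (F c p * F w x + F x p * F w c)"
    using sym[of x p] by (simp add: algebra_simps)
  also have "\<dots> = (F i p * F w x + F i x * F w p) * F c x"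
    unfolding H5'[symmetric] by (simp add: algebra_simps)
  finally show ?thesis unfolding rel_def by (rule sf_cancel)
qed

lemma crosses_iff:
  "crosses {a,b} {p,q} \<longleftrightarrow>
    (a < p \<and> p < b \<and> (q < a \<or> b < q)) \<or> (a < q \<and> q < b \<and> (p < a \<or> b < p)) \<or>
    (b < p \<and> p < a \<and> (q < b \<or> a < q)) \<or> (b < q \<and> q < a \<and> (p < b \<or> a < p))"
  unfolding crosses_def doubleton_eq_iff by blast

lemma crosses_sym: "crosses d e \<Longrightarrow> crosses e d"
proof -
  assume "crosses d e"
  then obtain a b p q where "d = {a,b}" "e = {p,q}" "crosses {a,b} {p,q}" unfolding crosses_def by blast
  moreover from this(3) have "crosses {p,q} {a,b}" unfolding crosses_iff by auto
  ultimately show ?thesis by simp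
qed

lemma crosses_distinct: "crosses {a,b} {p,q} \<Longrightarrow> a \<noteq> b \<and> a \<noteq> p \<and> a \<noteq> q \<and> b \<noteq> p \<and> b \<noteq> q \<and> p \<noteq> q"
  unfolding crosses_iff by auto

lemma edge_iff:
  assumes "a < b"
  shows "is_edge V {a,b} \<longleftrightarrow> a \<in> V \<and> b \<in> V \<and>
     ({y \<in> V. a < y \<and> y < b} = {} \<or> {y \<in> V. y < a \<or> b < y} = {})"
proof
  assume "is_edge V {a,b}"
  then obtain a' b' where h: "a' \<in> V" "b' \<in> V" "a' < b'" "{a,b} = {a',b'}"
    "{y \<in> V. a' < y \<and> y < b'} = {} \<or> {y \<in> V. y < a' \<or> b' < y} = {}"
    unfolding is_edge_def by blast
  then have "a' = a \<and> b' = b" using assms by (auto simp: doubleton_eq_iff)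
  then show "a \<in> V \<and> b \<in> V \<and>
     ({y \<in> V. a < y \<and> y < b} = {} \<or> {y \<in> V. y < a \<or> b < y} = {})" using h by simp
next
  assume "a \<in> V \<and> b \<in> V \<and>
     ({y \<in> V. a < y \<and> y < b} = {} \<or> {y \<in> V. y < a \<or> b < y} = {})"
  then show "is_edge V {a,b}" unfolding is_edge_def using assms by blast
qed


lemma diags_iff: "d \<in> diags V \<longleftrightarrow> (\<exists>a b. a < b \<and> a \<in> V \<and> b \<in> V \<and> d = {a,b})"
  unfolding diags_def
  by (auto, metis insert_commute linorder_neqE_nat)

lemma edge_subset: "is_edge V g \<Longrightarrow> g \<subseteq> V"
  unfolding is_edge_def by auto

lemma edge_in_diags: "is_edge V g \<Longrightarrow> g \<in> diags V"
  unfolding is_edge_def diags_iff by blast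

lemma edge_obtain: "is_edge V g \<Longrightarrow> \<exists>a b. a < b \<and> g = {a,b}"
  unfolding is_edge_def by auto

lemma edge_no_cross:
  assumes "is_edge V g" "p \<in> V" "q \<in> V" "crosses g {p,q}" shows False
proof -
  from edge_obtain[OF assms(1)] obtain a b where ab: "a<b" "g={a,b}" by blast
  have em: "(\<forall>y\<in>V. \<not> (a<y \<and> y<b)) \<or> (\<forall>y\<in>V. \<not> (y<a \<or> b<y))"
    using assms(1) unfolding ab edge_iff[OF ab(1)] by auto
  have "(\<exists>y\<in>V. a<y \<and> y<b) \<and> (\<exists>y\<in>V. y<a \<or> b<y)"
    using assms(4) assms(2,3) ab(1) unfolding ab crosses_iff by auto
  then show False using em by blast
qed

lemma edge_sub:
  assumes "S \<subseteq> V" "is_edge V d" "d \<subseteq> S" shows "is_edge S d"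
proof -
  obtain a b where ab: "a<b" "d={a,b}" using edge_obtain[OF assms(2)] by blast
  show ?thesis using assms unfolding ab edge_iff[OF ab(1)] by auto
qed

lemma diags_mono: "S \<subseteq> V \<Longrightarrow> diags S \<subseteq> diags V"
  unfolding diags_def by blast

lemma internal_sub:
  assumes "S \<subseteq> V" "d \<in> internal_diags S" shows "d \<in> internal_diags V"
proof -
  have "d \<subseteq> S" using assms(2) unfolding internal_diags_def diags_def by auto
  moreover have "d \<in> diags V" using assms diags_mono unfolding internal_diags_def by blast
  moreover have "\<not> is_edge V d" using assms edge_sub[OF assms(1) _ \<open>d \<subseteq> S\<close>] unfolding internal_diags_def by blast
  ultimately show ?thesis unfolding internal_diags_def by blast
qed

lemma side_edge:
  assumes fin: "finite S" and cx: "c < x" and u: "u \<in> S" "c < u" "u < x"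
    and w: "w \<in> S" "w < c \<or> x < w" and nc: "c \<notin> S \<or> x \<notin> S"
  shows "\<exists>g. is_edge S g \<and> crosses g {c,x}"
proof -
  let ?A = "{s\<in>S. c < s \<and> s < x}"
  have finA: "finite ?A" using fin by simp
  have neA: "?A \<noteq> {}" using u by blast
  show ?thesis
  proof (cases "c \<notin> S")
    case True
    define u' where "u' = Min ?A"
    have u'A: "u' \<in> ?A" unfolding u'_def using finA neA Min_in by blast
    have u'min: "\<And>s. s \<in> ?A \<Longrightarrow> u' \<le> s" unfolding u'_def using finA by simp
    show ?thesis
    proof (cases "\<exists>s\<in>S. s < u'")
      case True
      let ?B = "{s\<in>S. s < u'}"
      define w' where "w' = Max ?B"
      have finB: "finite ?B" using fin by simp
      have w'B: "w' \<in> ?B" unfolding w'_def using finB True Max_in by blast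
      have w'max: "\<And>s. s \<in> ?B \<Longrightarrow> s \<le> w'" unfolding w'_def using finB by simp
      have "w' < c"
      proof (rule ccontr)
        assume "\<not> w' < c"
        then have "c < w'" using \<open>c \<notin> S\<close> w'B by (cases "w' = c") auto
        then have "w' \<in> ?A" using w'B u'A by auto
        then show False using u'min w'B by fastforce
      qed
      have "is_edge S {w', u'}"
        unfolding edge_iff[OF conjunct2[OF CollectD[OF w'B]]]
        using w'B u'A w'max by fastforce
      moreover have "crosses {w', u'} {c,x}"
        unfolding crosses_iff using \<open>w' < c\<close> u'A by auto
      ultimately show ?thesis by blast
    next
      case False
      then have ge: "\<forall>s\<in>S. u' \<le> s" by auto
      have "x < w" using w ge u'A by force
      define m where "m = Max S"
      have mS: "m \<in> S" unfolding m_def using fin u Max_in by blast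
      have mmax: "\<And>s. s \<in> S \<Longrightarrow> s \<le> m" unfolding m_def using fin by simp
      have "x < m" using mmax[OF w(1)] \<open>x < w\<close> by simp
      have lt: "u' < m" using u'A \<open>x < m\<close> by auto
      have "is_edge S {u', m}"
        unfolding edge_iff[OF lt] using u'A mS ge mmax by fastforce
      moreover have "crosses {u', m} {c,x}"
        unfolding crosses_iff using \<open>x < m\<close> u'A by auto
      ultimately show ?thesis by blast
    qed
  next
    case False
    then have "x \<notin> S" using nc by blast
    define u' where "u' = Max ?A"
    have u'A: "u' \<in> ?A" unfolding u'_def using finA neA Max_in by blast
    have u'max: "\<And>s. s \<in> ?A \<Longrightarrow> s \<le> u'" unfolding u'_def using finA by simp
    show ?thesis
    proof (cases "\<exists>s\<in>S. u' < s")
      case True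
      let ?B = "{s\<in>S. u' < s}"
      define w' where "w' = Min ?B"
      have finB: "finite ?B" using fin by simp
      have w'B: "w' \<in> ?B" unfolding w'_def using finB True Min_in by blast
      have w'min: "\<And>s. s \<in> ?B \<Longrightarrow> w' \<le> s" unfolding w'_def using finB by simp
      have "x < w'"
      proof (rule ccontr)
        assume "\<not> x < w'"
        then have "w' < x" using \<open>x \<notin> S\<close> w'B by (cases "w' = x") auto
        then have "w' \<in> ?A" using w'B u'A by auto
        then show False using u'max w'B by fastforce
      qed
      have lt: "u' < w'" using w'B by simp
      have "is_edge S {u', w'}"
        unfolding edge_iff[OF lt]
        using w'B u'A w'min by fastforce
      moreover have "crosses {u', w'} {c,x}"
        unfolding crosses_iff using \<open>x < w'\<close> u'A by auto
      ultimately show ?thesis by blast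
    next
      case False
      then have le: "\<forall>s\<in>S. s \<le> u'" by auto
      have "w < c" using w le u'A by force
      define m where "m = Min S"
      have mS: "m \<in> S" unfolding m_def using fin u Min_in by blast
      have mmin: "\<And>s. s \<in> S \<Longrightarrow> m \<le> s" unfolding m_def using fin by simp
      have "m < c" using mmin[OF w(1)] \<open>w < c\<close> by simp
      have lt: "m < u'" using u'A \<open>m < c\<close> by auto
      have "is_edge S {m, u'}"
        unfolding edge_iff[OF lt] using u'A mS le mmin by fastforce
      moreover have "crosses {m, u'} {c,x}"
        unfolding crosses_iff using \<open>m < c\<close> u'A by auto
      ultimately show ?thesis by blast
    qed
  qed
qed

lemma internal_e:
  assumes "c < x" "c \<in> S" "x \<in> S" "u \<in> S" "c < u" "u < x" "w \<in> S" "w < c \<or> x < w"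
  shows "{c,x} \<in> internal_diags S"
proof -
  have "{c,x} \<in> diags S" unfolding diags_iff using assms by blast
  moreover have "\<not> is_edge S {c,x}" unfolding edge_iff[OF assms(1)] using assms by auto
  ultimately show ?thesis unfolding internal_diags_def by blast
qed

lemma three_elems:
  assumes "finite S" "card S \<ge> 3" shows "\<exists>t\<in>S. t \<noteq> u \<and> t \<noteq> w"
proof (rule ccontr)
  assume "\<not> ?thesis"
  then have "S \<subseteq> {u,w}" by blast
  then have "card S \<le> card {u,w}" by (rule card_mono[rotated]) simp
  also have "\<dots> \<le> 2" by (simp add: card_insert_if)
  finally show False using assms by simp
qed

lemma gap_edge:
  assumes fin: "finite V" and SV: "S \<subseteq> V" and c3: "card S \<ge> 3" and v: "v \<in> V" "v \<notin> S"
  shows "\<exists>g. is_edge S g \<and> \<not> is_edge V g"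
proof -
  have finS: "finite S" using fin SV finite_subset by blast
  have neS: "S \<noteq> {}" using c3 by auto
  show ?thesis
  proof (cases "(\<exists>s\<in>S. s < v) \<and> (\<exists>s\<in>S. v < s)")
    case True
    let ?L = "{s\<in>S. s < v}" and ?R = "{s\<in>S. v < s}"
    define u where "u = Max ?L"
    define w where "w = Min ?R"
    have uL: "u \<in> ?L" unfolding u_def by (rule Max_in) (use True finS in auto)
    have wR: "w \<in> ?R" unfolding w_def by (rule Min_in) (use True finS in auto)
    have umax: "\<And>s. s \<in> ?L \<Longrightarrow> s \<le> u" unfolding u_def using finS by simp
    have wmin: "\<And>s. s \<in> ?R \<Longrightarrow> w \<le> s" unfolding w_def using finS by simp
    have lt: "u < w" using uL wR by auto
    obtain t where t: "t \<in> S" "t \<noteq> u" "t \<noteq> w" using three_elems[OF finS c3] by blast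
    have tout: "t < u \<or> w < t"
    proof -
      have "t \<noteq> v" using t v by auto
      then show ?thesis using t umax[of t] wmin[of t] by (cases "t < v") auto
    qed
    have nb: "\<forall>y\<in>S. \<not>(u<y \<and> y<w)"
    proof (intro ballI notI)
      fix y assume y: "y\<in>S" "u<y \<and> y<w"
      have "y \<noteq> v" using y v by auto
      then show False using umax[of y] wmin[of y] y by (cases "y<v") auto
    qed
    have "is_edge S {u,w}"
      unfolding edge_iff[OF lt] using uL wR nb by auto
    moreover have "\<not> is_edge V {u,w}"
    proof -
      have "v \<in> {y\<in>V. u<y \<and> y<w}" using uL wR v by auto
      moreover have "t \<in> {y\<in>V. y<u \<or> w<y}" using t tout SV by auto
      ultimately show ?thesis unfolding edge_iff[OF lt] by blast
    qed
    ultimately show ?thesis by blast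
  next
    case False
    define m where "m = Min S"
    define M where "M = Max S"
    have mS: "m \<in> S" unfolding m_def using finS neS by simp
    have MS: "M \<in> S" unfolding M_def using finS neS by simp
    have mmin: "\<And>s. s \<in> S \<Longrightarrow> m \<le> s" unfolding m_def using finS by simp
    have Mmax: "\<And>s. s \<in> S \<Longrightarrow> s \<le> M" unfolding M_def using finS by simp
    obtain t where t: "t \<in> S" "t \<noteq> m" "t \<noteq> M" using three_elems[OF finS c3] by blast
    have tb: "m < t" "t < M" using t mmin[of t] Mmax[of t] by linarith+
    have lt: "m < M" using tb by simp
    have vout: "v < m \<or> M < v"
    proof -
      have ne: "\<forall>s\<in>S. s \<noteq> v" using v by auto
      have "(\<forall>s\<in>S. \<not> s<v) \<or> (\<forall>s\<in>S. \<not> v<s)" using False by blast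
      then have "(\<forall>s\<in>S. v < s) \<or> (\<forall>s\<in>S. s < v)"
        using ne by (auto simp: not_less le_less)
      then show ?thesis using mS MS by blast
    qed
    have "{y\<in>S. y<m \<or> M<y} = {}" using mmin Mmax by force
    then have "is_edge S {m,M}"
      unfolding edge_iff[OF lt] using mS MS by blast
    moreover have "\<not> is_edge V {m,M}"
    proof -
      have "t \<in> {y\<in>V. m<y \<and> y<M}" using t tb SV by auto
      moreover have "v \<in> {y\<in>V. y<m \<or> M<y}" using vout v by auto
      ultimately show ?thesis unfolding edge_iff[OF lt] by blast
    qed
    ultimately show ?thesis by blast
  qed
qed

lemma cells_empty:
  assumes "polygon V" shows "cells V {} = {V}"
proof -
  have "V \<in> cells V {}" using assms unfolding cells_def subpolygon_def polygon_def by auto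
  moreover have "S = V" if "S \<in> cells V {}" for S
  proof (rule ccontr)
    assume "S \<noteq> V"
    have SV: "S \<subseteq> V" and c3: "card S \<ge> 3" and ed: "\<And>e. is_edge S e \<Longrightarrow> is_edge V e"
      using that unfolding cells_def subpolygon_def by auto
    then obtain v where "v \<in> V" "v \<notin> S" using \<open>S \<noteq> V\<close> by blast
    then show False using gap_edge[OF _ SV c3] assms ed unfolding polygon_def by blast
  qed
  ultimately show ?thesis by blast
qed


lemma diags_pair: "a < b \<Longrightarrow> {a,b} \<in> diags V \<longleftrightarrow> a \<in> V \<and> b \<in> V"
  unfolding diags_iff by (auto simp: doubleton_eq_iff)

lemma diags_subset: "d \<in> diags V \<Longrightarrow> d \<subseteq> V"
  unfolding diags_def by auto

lemma internal_subset: "d \<in> internal_diags V \<Longrightarrow> d \<subseteq> V"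
  unfolding internal_diags_def diags_def by auto

lemma diags_Pow: "diags V \<subseteq> Pow V"
  unfolding diags_def by auto

locale cut =
  fixes V :: "nat set" and E :: "nat set set" and c x :: nat
    and V1 V2 :: "nat set" and E1 E2 :: "nat set set"
  assumes pol: "polygon V" and dis: "dissection V E" and eE: "{c,x} \<in> E" and cx: "c < x"
    and V1_eq: "V1 = {v\<in>V. c \<le> v \<and> v \<le> x}" and V2_eq: "V2 = {v\<in>V. v \<le> c \<or> x \<le> v}"
    and E1_eq: "E1 = {d\<in>E. d \<subseteq> V1 \<and> d \<noteq> {c,x}}" and E2_eq: "E2 = {d\<in>E. d \<subseteq> V2 \<and> d \<noteq> {c,x}}"
begin

lemma finV: "finite V" using pol unfolding polygon_def by auto

lemma e_int: "{c,x} \<in> internal_diags V" using dis eE unfolding dissection_def by auto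

lemma cxV: "c \<in> V" "x \<in> V"
  using e_int diags_pair[OF cx] unfolding internal_diags_def by auto

lemma not_edge: "\<not> is_edge V {c,x}"
  using e_int unfolding internal_diags_def by auto

lemma inner: "\<exists>u\<in>V. c < u \<and> u < x"
  using not_edge cxV unfolding edge_iff[OF cx] by auto

lemma outer: "\<exists>w\<in>V. w < c \<or> x < w"
  using not_edge cxV unfolding edge_iff[OF cx] by auto

lemma V1_sub: "V1 \<subseteq> V" unfolding V1_eq by auto
lemma V2_sub: "V2 \<subseteq> V" unfolding V2_eq by auto

lemma V12: "V1 \<inter> V2 = {c,x}"
  using cxV cx by (auto simp: V1_eq V2_eq)

lemma cx1: "c \<in> V1" "x \<in> V1" using cxV cx by (auto simp: V1_eq)
lemma cx2: "c \<in> V2" "x \<in> V2" using cxV cx by (auto simp: V2_eq)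

lemma finE: "finite E"
proof -
  have "E \<subseteq> Pow V" using dis diags_Pow unfolding dissection_def internal_diags_def by auto
  then show ?thesis using finV finite_subset by blast
qed

lemma E_int: "d \<in> E \<Longrightarrow> d \<in> internal_diags V"
  using dis unfolding dissection_def by auto

lemma E_nc: "d \<in> E \<Longrightarrow> d' \<in> E \<Longrightarrow> \<not> crosses d d'"
  using dis unfolding dissection_def by auto

lemma pol1: "polygon V1"
proof -
  obtain u where u: "u \<in> V" "c < u" "u < x" using inner by blast
  have fin: "finite V1" using finV V1_sub finite_subset by blast
  have "{c,u,x} \<subseteq> V1" using u cx1 by (auto simp: V1_eq)
  then have "card {c,u,x} \<le> card V1" using fin by (rule card_mono[rotated])
  moreover have "card {c,u,x} = 3" using u by auto
  ultimately show ?thesis using fin unfolding polygon_def by auto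
qed

lemma pol2: "polygon V2"
proof -
  obtain w where w: "w \<in> V" "w < c \<or> x < w" using outer by blast
  have fin: "finite V2" using finV V2_sub finite_subset by blast
  have "{c,w,x} \<subseteq> V2" using w cx2 by (auto simp: V2_eq)
  then have "card {c,w,x} \<le> card V2" using fin by (rule card_mono[rotated])
  moreover have "card {c,w,x} = 3" using w cx by auto
  ultimately show ?thesis using fin unfolding polygon_def by auto
qed

lemma edge1: "is_edge V1 {c,x}"
  unfolding edge_iff[OF cx] using cx1 by (auto simp: V1_eq)

lemma edge2: "is_edge V2 {c,x}"
  unfolding edge_iff[OF cx] using cx2 by (auto simp: V2_eq)

lemma edge_back1:
  assumes "is_edge V1 d" "d \<noteq> {c,x}" shows "is_edge V d"
proof -
  obtain a b where ab: "a<b" "d={a,b}" using edge_obtain[OF assms(1)] by blast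
  have ab1: "a \<in> V1" "b \<in> V1"
    and em: "(\<forall>y\<in>V1. \<not>(a<y \<and> y<b)) \<or> (\<forall>y\<in>V1. \<not>(y<a \<or> b<y))"
    using assms(1) unfolding ab edge_iff[OF ab(1)] by auto
  have abV: "a \<in> V" "b \<in> V" using ab1 V1_sub by auto
  show ?thesis
    using em
  proof
    assume em1: "\<forall>y\<in>V1. \<not>(a<y \<and> y<b)"
    have "\<forall>y\<in>V. \<not>(a<y \<and> y<b)"
    proof (intro ballI notI)
      fix y assume y: "y \<in> V" "a<y \<and> y<b"
      then have "y \<in> V1" using ab1 by (auto simp: V1_eq)
      then show False using em1 y by auto
    qed
    then show ?thesis unfolding ab edge_iff[OF ab(1)] using abV by auto
  next
    assume em2: "\<forall>y\<in>V1. \<not>(y<a \<or> b<y)"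
    have "a = c" using em2 cx1(1) ab1(1) by (auto simp: V1_eq)
    moreover have "b = x" using em2 cx1(2) ab1(2) by (auto simp: V1_eq)
    ultimately show ?thesis using assms(2) ab by simp
  qed
qed

lemma edge_back2:
  assumes "is_edge V2 d" "d \<noteq> {c,x}" shows "is_edge V d"
proof -
  obtain a b where ab: "a<b" "d={a,b}" using edge_obtain[OF assms(1)] by blast
  have ab2: "a \<in> V2" "b \<in> V2"
    and em: "(\<forall>y\<in>V2. \<not>(a<y \<and> y<b)) \<or> (\<forall>y\<in>V2. \<not>(y<a \<or> b<y))"
    using assms(1) unfolding ab edge_iff[OF ab(1)] by auto
  have abV: "a \<in> V" "b \<in> V" using ab2 V2_sub by auto
  have ab': "a \<le> c \<or> x \<le> a" "b \<le> c \<or> x \<le> b" using ab2 by (auto simp: V2_eq)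
  show ?thesis
    using em
  proof
    assume em1: "\<forall>y\<in>V2. \<not>(a<y \<and> y<b)"
    have "\<forall>y\<in>V. \<not>(a<y \<and> y<b)"
    proof (intro ballI notI)
      fix y assume y: "y \<in> V" "a<y \<and> y<b"
      show False
      proof (cases "y \<in> V2")
        case True then show False using em1 y by auto
      next
        case False
        then have yy: "c < y" "y < x" using y by (auto simp: V2_eq)
        have "a \<le> c" using ab' yy y by auto
        have "x \<le> b" using ab' yy y by auto
        have "a = c" using em1 cx2(1) \<open>a \<le> c\<close> \<open>x \<le> b\<close> cx by force
        moreover have "b = x" using em1 cx2(2) \<open>a \<le> c\<close> \<open>x \<le> b\<close> cx by force
        ultimately show False using assms(2) ab by simp
      qed
    qed
    then show ?thesis unfolding ab edge_iff[OF ab(1)] using abV by auto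
  next
    assume em2: "\<forall>y\<in>V2. \<not>(y<a \<or> b<y)"
    have "\<forall>y\<in>V. \<not>(y<a \<or> b<y)"
    proof (intro ballI notI)
      fix y assume y: "y \<in> V" "y<a \<or> b<y"
      show False
      proof (cases "y \<in> V2")
        case True then show False using em2 y by auto
      next
        case False
        then have yy: "c < y" "y < x" using y by (auto simp: V2_eq)
        show False
          using y(2)
        proof
          assume "y < a"
          then have "x \<le> a" using ab' yy by auto
          then show False using em2 cx2(1) cx by auto
        next
          assume "b < y"
          then have "b \<le> c" using ab' yy by auto
          then show False using em2 cx2(2) cx by auto
        qed
      qed
    qed
    then show ?thesis unfolding ab edge_iff[OF ab(1)] using abV by auto
  qed
qed

lemma E_split: "E = insert {c,x} (E1 \<union> E2)"
proof
  show "insert {c,x} (E1 \<union> E2) \<subseteq> E" using eE by (auto simp: E1_eq E2_eq)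
next
  show "E \<subseteq> insert {c,x} (E1 \<union> E2)"
  proof
    fix d assume d: "d \<in> E"
    show "d \<in> insert {c,x} (E1 \<union> E2)"
    proof (cases "d = {c,x}")
      case True then show ?thesis by simp
    next
      case False
      obtain a b where ab: "a < b" "a \<in> V" "b \<in> V" "d = {a,b}"
        using E_int[OF d] unfolding internal_diags_def diags_iff by blast
      have nc: "\<not> crosses {a,b} {c,x}" using E_nc[OF d eE] ab by simp
      have "d \<subseteq> V1 \<or> d \<subseteq> V2"
      proof (rule ccontr)
        assume "\<not> (d \<subseteq> V1 \<or> d \<subseteq> V2)"
        then have h1: "a < c \<or> x < a \<or> b < c \<or> x < b" and h2: "(c < a \<and> a < x) \<or> (c < b \<and> b < x)"
          using ab by (auto simp: V1_eq V2_eq)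
        have "crosses {a,b} {c,x}" unfolding crosses_iff using h1 h2 ab(1) cx by auto
        then show False using nc by simp
      qed
      then show ?thesis using d False by (auto simp: E1_eq E2_eq)
    qed
  qed
qed

lemma cell_side:
  assumes S: "S \<in> cells V E" shows "S \<subseteq> V1 \<or> S \<subseteq> V2"
proof (rule ccontr)
  assume nn: "\<not> (S \<subseteq> V1 \<or> S \<subseteq> V2)"
  have SV: "S \<subseteq> V" and ed: "\<And>g. is_edge S g \<Longrightarrow> is_edge V g \<or> g \<in> E"
    and ni: "\<And>e. e \<in> E \<Longrightarrow> e \<notin> internal_diags S"
    using S unfolding cells_def subpolygon_def by auto
  obtain w where w0: "w \<in> S" "w \<notin> V1" using nn by blast
  then have w: "w \<in> S" "w < c \<or> x < w" using SV by (auto simp: V1_eq)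
  obtain u where u0: "u \<in> S" "u \<notin> V2" using nn by blast
  then have u: "u \<in> S" "c < u" "u < x" using SV by (auto simp: V2_eq)
  have finS: "finite S" using SV finV finite_subset by blast
  show False
  proof (cases "c \<in> S \<and> x \<in> S")
    case True
    then have "{c,x} \<in> internal_diags S" using internal_e[OF cx _ _ u w] by blast
    then show False using ni eE by blast
  next
    case False
    then obtain g where g: "is_edge S g" "crosses g {c,x}"
      using side_edge[OF finS cx u w] by blast
    from ed[OF g(1)] show False
    proof
      assume "is_edge V g" then show False using edge_no_cross g(2) cxV by blast
    next
      assume "g \<in> E" then show False using E_nc eE g(2) by blast
    qed
  qed
qed


lemma dis1: "dissection V1 E1"
proof -
  have "E1 \<subseteq> internal_diags V1"
  proof
    fix d assume d: "d \<in> E1"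
    then have dE: "d \<in> E" and dV1: "d \<subseteq> V1" and dne: "d \<noteq> {c,x}" by (auto simp: E1_eq)
    obtain a b where ab: "a < b" "d = {a,b}"
      using E_int[OF dE] unfolding internal_diags_def diags_iff by blast
    have "d \<in> diags V1" using dV1 diags_pair[OF ab(1)] ab(2) by auto
    moreover have "\<not> is_edge V1 d" using edge_back1[OF _ dne] E_int[OF dE] unfolding internal_diags_def by blast
    ultimately show "d \<in> internal_diags V1" unfolding internal_diags_def by blast
  qed
  moreover have "E1 \<subseteq> E" by (auto simp: E1_eq)
  ultimately show ?thesis using E_nc unfolding dissection_def by blast
qed

lemma card1: "card E1 < card E"
proof -
  have "E1 \<subset> E" using eE by (auto simp: E1_eq)
  then show ?thesis using finE psubset_card_mono by blast
qed

lemma cells_to1: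
  assumes S: "S \<in> cells V E" and SV1: "S \<subseteq> V1" shows "S \<in> cells V1 E1"
proof -
  have SV: "S \<subseteq> V" and c3: "card S \<ge> 3" and ed: "\<And>g. is_edge S g \<Longrightarrow> is_edge V g \<or> g \<in> E"
    and ni: "\<And>e. e \<in> E \<Longrightarrow> e \<notin> internal_diags S"
    using S unfolding cells_def subpolygon_def by auto
  have A: "subpolygon S V1" using SV1 c3 unfolding subpolygon_def by auto
  have B: "is_edge V1 g \<or> g \<in> E1" if g: "is_edge S g" for g
  proof -
    have gS: "g \<subseteq> S" using edge_subset[OF g] .
    from ed[OF g] show ?thesis
    proof
      assume "is_edge V g"
      then show ?thesis using edge_sub[OF V1_sub _ ] gS SV1 by blast
    next
      assume gE: "g \<in> E"
      show ?thesis
      proof (cases "g = {c,x}")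
        case True then show ?thesis using edge1 by simp
      next
        case False then show ?thesis using gE gS SV1 by (auto simp: E1_eq)
      qed
    qed
  qed
  have C: "e \<notin> internal_diags S" if "e \<in> E1" for e
    using ni that by (auto simp: E1_eq)
  show ?thesis unfolding cells_def using A B C by blast
qed

lemma cells_from1:
  assumes S: "S \<in> cells V1 E1" shows "S \<in> cells V E"
proof -
  have SV1: "S \<subseteq> V1" and c3: "card S \<ge> 3" and ed: "\<And>g. is_edge S g \<Longrightarrow> is_edge V1 g \<or> g \<in> E1"
    and ni: "\<And>e. e \<in> E1 \<Longrightarrow> e \<notin> internal_diags S"
    using S unfolding cells_def subpolygon_def by auto
  have A: "subpolygon S V" using SV1 V1_sub c3 unfolding subpolygon_def by auto
  have B: "is_edge V g \<or> g \<in> E" if g: "is_edge S g" for g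
  proof -
    from ed[OF g] show ?thesis
    proof
      assume h: "is_edge V1 g"
      show ?thesis
      proof (cases "g = {c,x}")
        case True then show ?thesis using eE by simp
      next
        case False then show ?thesis using edge_back1[OF h] by blast
      qed
    next
      assume "g \<in> E1" then show ?thesis by (auto simp: E1_eq)
    qed
  qed
  have C: "e \<notin> internal_diags S" if eE': "e \<in> E" for e
  proof
    assume ei: "e \<in> internal_diags S"
    then have eS: "e \<subseteq> S" using internal_subset by blast
    show False
    proof (cases "e = {c,x}")
      case True
      then have "is_edge S e" using edge_sub[OF SV1 edge1] eS by simp
      then show False using ei unfolding internal_diags_def by blast
    next
      case False
      then have "e \<in> E1" using eE' eS SV1 by (auto simp: E1_eq)
      then show False using ni ei by blast
    qed
  qed
  show ?thesis unfolding cells_def using A B C by blast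
qed

lemma dis2: "dissection V2 E2"
proof -
  have "E2 \<subseteq> internal_diags V2"
  proof
    fix d assume d: "d \<in> E2"
    then have dE: "d \<in> E" and dV2: "d \<subseteq> V2" and dne: "d \<noteq> {c,x}" by (auto simp: E2_eq)
    obtain a b where ab: "a < b" "d = {a,b}"
      using E_int[OF dE] unfolding internal_diags_def diags_iff by blast
    have "d \<in> diags V2" using dV2 diags_pair[OF ab(1)] ab(2) by auto
    moreover have "\<not> is_edge V2 d" using edge_back2[OF _ dne] E_int[OF dE] unfolding internal_diags_def by blast
    ultimately show "d \<in> internal_diags V2" unfolding internal_diags_def by blast
  qed
  moreover have "E2 \<subseteq> E" by (auto simp: E2_eq)
  ultimately show ?thesis using E_nc unfolding dissection_def by blast
qed

lemma card2: "card E2 < card E"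
proof -
  have "E2 \<subset> E" using eE by (auto simp: E2_eq)
  then show ?thesis using finE psubset_card_mono by blast
qed

lemma cells_to2:
  assumes S: "S \<in> cells V E" and SV2: "S \<subseteq> V2" shows "S \<in> cells V2 E2"
proof -
  have SV: "S \<subseteq> V" and c3: "card S \<ge> 3" and ed: "\<And>g. is_edge S g \<Longrightarrow> is_edge V g \<or> g \<in> E"
    and ni: "\<And>e. e \<in> E \<Longrightarrow> e \<notin> internal_diags S"
    using S unfolding cells_def subpolygon_def by auto
  have A: "subpolygon S V2" using SV2 c3 unfolding subpolygon_def by auto
  have B: "is_edge V2 g \<or> g \<in> E2" if g: "is_edge S g" for g
  proof -
    have gS: "g \<subseteq> S" using edge_subset[OF g] .
    from ed[OF g] show ?thesis
    proof
      assume "is_edge V g"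
      then show ?thesis using edge_sub[OF V2_sub _ ] gS SV2 by blast
    next
      assume gE: "g \<in> E"
      show ?thesis
      proof (cases "g = {c,x}")
        case True then show ?thesis using edge2 by simp
      next
        case False then show ?thesis using gE gS SV2 by (auto simp: E2_eq)
      qed
    qed
  qed
  have C: "e \<notin> internal_diags S" if "e \<in> E2" for e
    using ni that by (auto simp: E2_eq)
  show ?thesis unfolding cells_def using A B C by blast
qed

lemma cells_from2:
  assumes S: "S \<in> cells V2 E2" shows "S \<in> cells V E"
proof -
  have SV2: "S \<subseteq> V2" and c3: "card S \<ge> 3" and ed: "\<And>g. is_edge S g \<Longrightarrow> is_edge V2 g \<or> g \<in> E2"
    and ni: "\<And>e. e \<in> E2 \<Longrightarrow> e \<notin> internal_diags S"
    using S unfolding cells_def subpolygon_def by auto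
  have A: "subpolygon S V" using SV2 V2_sub c3 unfolding subpolygon_def by auto
  have B: "is_edge V g \<or> g \<in> E" if g: "is_edge S g" for g
  proof -
    from ed[OF g] show ?thesis
    proof
      assume h: "is_edge V2 g"
      show ?thesis
      proof (cases "g = {c,x}")
        case True then show ?thesis using eE by simp
      next
        case False then show ?thesis using edge_back2[OF h] by blast
      qed
    next
      assume "g \<in> E2" then show ?thesis by (auto simp: E2_eq)
    qed
  qed
  have C: "e \<notin> internal_diags S" if eE': "e \<in> E" for e
  proof
    assume ei: "e \<in> internal_diags S"
    then have eS: "e \<subseteq> S" using internal_subset by blast
    show False
    proof (cases "e = {c,x}")
      case True
      then have "is_edge S e" using edge_sub[OF SV2 edge2] eS by simp
      then show False using ei unfolding internal_diags_def by blast
    next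
      case False
      then have "e \<in> E2" using eE' eS SV2 by (auto simp: E2_eq)
      then show False using ni ei by blast
    qed
  qed
  show ?thesis unfolding cells_def using A B C by blast
qed

lemma cells_split: "cells V E = cells V1 E1 \<union> cells V2 E2"
  using cell_side cells_to1 cells_to2 cells_from1 cells_from2 by blast

lemma split_cross:
  assumes ab: "a < b" "a \<in> V" "b \<in> V" and nn: "\<not> ({a,b} \<subseteq> V1 \<or> {a,b} \<subseteq> V2)"
  shows "crosses {a,b} {c,x}"
proof -
  have h1: "a < c \<or> x < a \<or> b < c \<or> x < b" and h2: "(c < a \<and> a < x) \<or> (c < b \<and> b < x)"
    using ab nn by (auto simp: V1_eq V2_eq)
  show ?thesis unfolding crosses_iff using h1 h2 ab(1) cx by auto
qed

lemma edge_side: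
  assumes g: "is_edge V g" shows "g \<subseteq> V1 \<or> g \<subseteq> V2"
proof (rule ccontr)
  assume nn: "\<not> (g \<subseteq> V1 \<or> g \<subseteq> V2)"
  obtain a b where ab: "a < b" "g = {a,b}" using edge_obtain[OF g] by blast
  have "a \<in> V" "b \<in> V" using edge_subset[OF g] ab by auto
  then have "crosses g {c,x}" using split_cross[OF ab(1)] nn ab by simp
  then show False using edge_no_cross[OF g cxV] by blast
qed

lemma mixed_sep:
  assumes S: "S \<in> cells V1 E1" and S': "S' \<in> cells V2 E2"
    and d: "d \<in> internal_diags S" and d': "d' \<in> internal_diags S'"
  shows "d \<noteq> d' \<and> \<not> crosses d d' \<and> \<not> crosses d' d"
proof -
  have SV1: "S \<subseteq> V1" using S unfolding cells_def subpolygon_def by auto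
  have SV2: "S' \<subseteq> V2" using S' unfolding cells_def subpolygon_def by auto
  have dS: "d \<subseteq> S" using internal_subset[OF d] .
  have dS': "d' \<subseteq> S'" using internal_subset[OF d'] .
  have dne: "d \<noteq> {c,x}"
  proof
    assume "d = {c,x}"
    then have "is_edge S d" using edge_sub[OF SV1 edge1] dS by simp
    then show False using d unfolding internal_diags_def by blast
  qed
  obtain a b where ab: "a < b" "d = {a,b}" using d unfolding internal_diags_def diags_iff by blast
  obtain p q where pq: "p < q" "d' = {p,q}" using d' unfolding internal_diags_def diags_iff by blast
  have a1: "c \<le> a" "a \<le> x" "c \<le> b" "b \<le> x" using dS SV1 ab by (auto simp: V1_eq)
  have p2: "p \<le> c \<or> x \<le> p" "q \<le> c \<or> x \<le> q" using dS' SV2 pq by (auto simp: V2_eq)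
  have "d \<noteq> d'"
  proof
    assume "d = d'"
    then have "d \<subseteq> V1 \<inter> V2" using dS dS' SV1 SV2 by auto
    then have "a \<in> {c,x}" "b \<in> {c,x}" using ab V12 by auto
    then have "d = {c,x}" using ab by auto
    then show False using dne by simp
  qed
  moreover have "\<not> crosses d d'" unfolding ab pq crosses_iff using a1 p2 by auto
  moreover have "\<not> crosses d' d" using calculation(2) crosses_sym by blast
  ultimately show ?thesis by blast
qed

end


locale glue =
  fixes V :: "nat set" and c x :: nat and V1 V2 :: "nat set"
    and D1 D2 :: "nat set set" and f1 f2 :: "nat set \<Rightarrow> 'k::semifield"
  assumes cx: "c < x" and cxV: "c \<in> V" "x \<in> V"
    and V1_eq: "V1 = {v\<in>V. c \<le> v \<and> v \<le> x}" and V2_eq: "V2 = {v\<in>V. v \<le> c \<or> x \<le> v}"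
    and D1: "\<forall>d\<in>D1. d \<subseteq> V1" and D2: "\<forall>d\<in>D2. d \<subseteq> V2"
    and wf1: "weak_frieze V1 D1 f1" and wf2: "weak_frieze V2 D2 f2"
    and agree: "f1 {c,x} = f2 {c,x}"
begin

definition gf :: "nat set \<Rightarrow> 'k" where
  "gf d = (if d \<in> diags V1 then f1 d else if d \<in> diags V2 then f2 d
     else if d \<in> diags V then
       (f1 {THE u. u \<in> d \<and> c < u \<and> u < x, c} * f2 {THE w. w \<in> d \<and> (w < c \<or> x < w), x}
        + f1 {THE u. u \<in> d \<and> c < u \<and> u < x, x} * f2 {THE w. w \<in> d \<and> (w < c \<or> x < w), c})
       * inverse (f1 {c,x})
     else undefined)"

abbreviation FF :: "nat \<Rightarrow> nat \<Rightarrow> 'k" where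
  "FF u v \<equiv> gf {u,v}"

lemma FF_sym: "FF u v = FF v u"
  by (simp add: insert_commute)

lemma V1_sub: "V1 \<subseteq> V" unfolding V1_eq by auto
lemma V2_sub: "V2 \<subseteq> V" unfolding V2_eq by auto
lemma V12: "V1 \<inter> V2 = {c,x}" using cxV cx by (auto simp: V1_eq V2_eq)
lemma cx1: "c \<in> V1" "x \<in> V1" using cxV cx by (auto simp: V1_eq)
lemma cx2: "c \<in> V2" "x \<in> V2" using cxV cx by (auto simp: V2_eq)

lemma gf_ext: "gf \<in> extensional (diags V)"
  unfolding extensional_def gf_def using diags_mono[OF V1_sub] diags_mono[OF V2_sub] by auto

lemma ag1: "u \<in> V1 \<Longrightarrow> v \<in> V1 \<Longrightarrow> u \<noteq> v \<Longrightarrow> gf {u,v} = f1 {u,v}"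
  unfolding gf_def diags_def by auto

lemma ag1d: "d \<in> diags V1 \<Longrightarrow> gf d = f1 d"
  unfolding gf_def by auto

lemma ag2d: "d \<in> diags V2 \<Longrightarrow> gf d = f2 d"
proof -
  assume d: "d \<in> diags V2"
  show ?thesis
  proof (cases "d \<in> diags V1")
    case True
    then have "d \<subseteq> V1 \<inter> V2" using d diags_subset by blast
    then have "d \<subseteq> {c,x}" using V12 by simp
    moreover obtain a b where ab: "a < b" "d = {a,b}" using d unfolding diags_iff by blast
    ultimately have "d = {c,x}" using cx by auto
    then show ?thesis using True agree unfolding gf_def by simp
  next
    case False then show ?thesis using d unfolding gf_def by simp
  qed
qed

lemma ag2: "u \<in> V2 \<Longrightarrow> v \<in> V2 \<Longrightarrow> u \<noteq> v \<Longrightarrow> gf {u,v} = f2 {u,v}"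
  using ag2d unfolding diags_def by blast

lemma gf_mixed:
  assumes u: "u \<in> V" "c < u" "u < x" and w: "w \<in> V" "w < c \<or> x < w"
  shows "gf {u,w} = (f1 {u,c} * f2 {w,x} + f1 {u,x} * f2 {w,c}) * inverse (f1 {c,x})"
proof -
  have n1: "{u,w} \<notin> diags V1" using w diags_subset by (fastforce simp: V1_eq)
  have n2: "{u,w} \<notin> diags V2" using u diags_subset by (fastforce simp: V2_eq)
  have uw: "u \<noteq> w" using u w by auto
  have d: "{u,w} \<in> diags V" using u w uw unfolding diags_def by auto
  have t1: "(THE u'. u' \<in> {u,w} \<and> c < u' \<and> u' < x) = u"
    by (rule the_equality) (use u w in auto)
  have t2: "(THE w'. w' \<in> {u,w} \<and> (w' < c \<or> x < w')) = w"
    by (rule the_equality) (use u w in auto)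
  show ?thesis unfolding gf_def using n1 n2 d t1 t2 by simp
qed

lemma PE:
  assumes u: "u \<in> V" "c < u" "u < x" and w: "w \<in> V" "w < c \<or> x < w"
  shows "rel FF u w c x"
proof -
  have u1: "u \<in> V1" using u by (auto simp: V1_eq)
  have w2: "w \<in> V2" using w by (auto simp: V2_eq)
  have e1: "FF c x = f1 {c,x}" using ag1 cx1 cx by auto
  have e2: "FF u c = f1 {u,c}" "FF u x = f1 {u,x}" using ag1 cx1 u1 u by auto
  have e3: "FF w x = f2 {w,x}" "FF w c = f2 {w,c}" using ag2 cx2 w2 w cx by auto
  have inv: "inverse (f1 {c,x}) * f1 {c,x} = 1" by (rule semifield_left_inverse)
  show ?thesis unfolding rel_def e1 e2 e3 gf_mixed[OF u w]
    by (simp add: mult.assoc inv)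
qed

lemma PE':
  assumes u: "u \<in> V" "c < u" "u < x" and w: "w \<in> V" "w < c \<or> x < w"
  shows "rel FF w u x c"
  using rel_swap1[OF FF_sym rel_swap2[OF FF_sym PE[OF u w]]] .

lemma sw1: "rel FF a b p q \<Longrightarrow> rel FF b a p q"
  by (rule rel_swap1[where F="\<lambda>u v. gf {u,v}"]) (simp_all add: insert_commute)

lemma sw2: "rel FF a b p q \<Longrightarrow> rel FF a b q p"
  by (rule rel_swap2[where F="\<lambda>u v. gf {u,v}"]) (simp_all add: insert_commute)

lemma rel1:
  assumes "a \<in> V1" "b \<in> V1" "p \<in> V1" "q \<in> V1" "crosses {a,b} {p,q}" "{p,q} \<in> D1"
  shows "rel FF a b p q"
proof -
  have dist: "a \<noteq> b \<and> a \<noteq> p \<and> a \<noteq> q \<and> b \<noteq> p \<and> b \<noteq> q \<and> p \<noteq> q"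
    using crosses_distinct[OF assms(5)] .
  have "f1 {a,b} * f1 {p,q} = f1 {a,p} * f1 {b,q} + f1 {a,q} * f1 {b,p}"
    using wf1 assms unfolding weak_frieze_def by blast
  then show ?thesis unfolding rel_def using ag1 assms dist by simp
qed

lemma rel2:
  assumes "a \<in> V2" "b \<in> V2" "p \<in> V2" "q \<in> V2" "crosses {a,b} {p,q}" "{p,q} \<in> D2"
  shows "rel FF a b p q"
proof -
  have dist: "a \<noteq> b \<and> a \<noteq> p \<and> a \<noteq> q \<and> b \<noteq> p \<and> b \<noteq> q \<and> p \<noteq> q"
    using crosses_distinct[OF assms(5)] .
  have "f2 {a,b} * f2 {p,q} = f2 {a,p} * f2 {b,q} + f2 {a,q} * f2 {b,p}"
    using wf2 assms unfolding weak_frieze_def by blast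
  then show ?thesis unfolding rel_def using ag2 assms dist by simp
qed


lemma core1:
  assumes i: "i \<in> V" "c < i" "i < x" and w: "w \<in> V" "w < c \<or> x < w"
    and pq: "p \<in> V1" "q \<in> V1" "p < q" "{p,q} \<in> D1" "{p,q} \<noteq> {c,x}"
    and cr: "crosses {i,w} {p,q}"
  shows "rel FF i w p q"
proof -
  have pr: "c \<le> p" "q \<le> x" "p \<in> V" "q \<in> V" using pq by (auto simp: V1_eq)
  have piq: "p < i" "i < q" using cr pr w pq(3) unfolding crosses_iff by auto
  have i1: "i \<in> V1" using i by (auto simp: V1_eq)
  have H3: "rel FF i w c x" using PE[OF i w] .
  show ?thesis
  proof (cases "p = c")
    case True
    then have qx: "q \<noteq> x" using pq(5) by auto
    have q: "c < q" "q < x" using qx pr piq i by auto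
    have "crosses {i,x} {c,q}" unfolding crosses_iff using q piq i by auto
    then have H2: "rel FF i x c q" using rel1[OF i1 cx1(2) cx1(1) pq(2)] pq(4) True by simp
    have H4: "rel FF q w c x" using PE[OF pr(4) q w] .
    show ?thesis using alg_pc[OF FF_sym H2 H3 H4] True by simp
  next
    case pc: False
    then have p: "c < p" "p < x" using pr piq i by auto
    have H5: "rel FF p w c x" using PE[OF pr(3) p w] .
    have "crosses {i,c} {p,q}" unfolding crosses_iff using p piq i by auto
    then have H1: "rel FF i c p q" using rel1[OF i1 cx1(1) pq(1) pq(2)] pq(4) by simp
    show ?thesis
    proof (cases "q = x")
      case True
      show ?thesis using alg_qx[OF FF_sym _ H3 H5] H1 True by simp
    next
      case False
      then have q: "c < q" "q < x" using pr piq i by auto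
      have H4: "rel FF q w c x" using PE[OF pr(4) q w] .
      have "crosses {i,x} {p,q}" unfolding crosses_iff using q p piq i by auto
      then have H2: "rel FF i x p q" using rel1[OF i1 cx1(2) pq(1) pq(2)] pq(4) by simp
      show ?thesis using alg_full[OF FF_sym H1 H2 H3 H4 H5] .
    qed
  qed
qed

lemma core2:
  assumes i: "i \<in> V" "c < i" "i < x" and w: "w \<in> V" "w < c \<or> x < w"
    and pq: "p \<in> V2" "q \<in> V2" "p < q" "{p,q} \<in> D2" "{p,q} \<noteq> {c,x}"
    and cr: "crosses {i,w} {p,q}"
  shows "rel FF i w p q"
proof -
  have pr: "p \<le> c \<or> x \<le> p" "q \<le> c \<or> x \<le> q" "p \<in> V" "q \<in> V" using pq by (auto simp: V2_eq)
  have w2: "w \<in> V2" using w by (auto simp: V2_eq)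
  have Hi: "rel FF w i x c" using PE'[OF i w] .
  have qp: "{q,p} \<in> D2" using pq(4) by (simp add: insert_commute)
  have "rel FF w i p q"
  proof (cases "q \<le> c")
    case True
    have pwq: "p < w" "w < q" using cr True pq(3) i unfolding crosses_iff by auto
    have pc: "p < c" using True pq(3) by simp
    have Hp: "rel FF p i x c" using PE'[OF i pr(3)] pc by simp
    show ?thesis
    proof (cases "q = c")
      case qc: True
      have "crosses {w,x} {p,c}" unfolding crosses_iff using pwq qc cx by auto
      then have H1: "rel FF w x p c" using rel2[OF w2 cx2(2) pq(1) cx2(1)] pq(4) qc by simp
      show ?thesis using alg_qx[OF FF_sym H1 Hi Hp] qc by simp
    next
      case False
      then have qc: "q < c" using True by simp
      have Hq: "rel FF q i x c" using PE'[OF i pr(4)] qc by simp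
      have "crosses {w,x} {p,q}" unfolding crosses_iff using pwq qc cx by auto
      then have H1: "rel FF w x p q" using rel2[OF w2 cx2(2) pq(1) pq(2)] pq(4) by simp
      have "crosses {w,c} {p,q}" unfolding crosses_iff using pwq qc cx by auto
      then have H2: "rel FF w c p q" using rel2[OF w2 cx2(1) pq(1) pq(2)] pq(4) by simp
      show ?thesis using alg_full[OF FF_sym H1 H2 Hi Hq Hp] .
    qed
  next
    case qnc: False
    then have xq: "x \<le> q" using pr(2) by simp
    show ?thesis
    proof (cases "x \<le> p")
      case True
      have pwq: "p < w" "w < q" using cr True pq(3) i unfolding crosses_iff by auto
      have Hq: "rel FF q i x c" using PE'[OF i pr(4)] pq(3) True by simp
      show ?thesis
      proof (cases "p = x")
        case px: True
        have "crosses {w,c} {x,q}" unfolding crosses_iff using pwq px cx by auto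
        then have H2: "rel FF w c x q" using rel2[OF w2 cx2(1) cx2(2) pq(2)] pq(4) px by simp
        show ?thesis using alg_pc[OF FF_sym H2 Hi Hq] px by simp
      next
        case False
        then have xp: "x < p" using True by simp
        have Hp: "rel FF p i x c" using PE'[OF i pr(3)] xp by simp
        have "crosses {w,x} {p,q}" unfolding crosses_iff using pwq xp cx by auto
        then have H1: "rel FF w x p q" using rel2[OF w2 cx2(2) pq(1) pq(2)] pq(4) by simp
        have "crosses {w,c} {p,q}" unfolding crosses_iff using pwq xp cx by auto
        then have H2: "rel FF w c p q" using rel2[OF w2 cx2(1) pq(1) pq(2)] pq(4) by simp
        show ?thesis using alg_full[OF FF_sym H1 H2 Hi Hq Hp] .
      qed
    next
      case False
      then have pc: "p \<le> c" using pr(1) by simp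
      have wout: "w < p \<or> q < w" using cr pc xq i w unfolding crosses_iff by auto
      have "rel FF w i q p"
      proof (cases "q = x")
        case qx: True
        then have pc': "p < c" using pq(5) pc by auto
        have Hp: "rel FF p i x c" using PE'[OF i pr(3)] pc' by simp
        have "crosses {w,c} {x,p}" unfolding crosses_iff using wout pc' qx cx by auto
        then have H2: "rel FF w c x p" using rel2[OF w2 cx2(1) cx2(2) pq(1)] qp qx by simp
        show ?thesis using alg_pc[OF FF_sym H2 Hi Hp] qx by simp
      next
        case qnx: False
        then have xq': "x < q" using xq by simp
        have Hq: "rel FF q i x c" using PE'[OF i pr(4)] xq' by simp
        show ?thesis
        proof (cases "p = c")
          case pc': True
          have "crosses {w,x} {q,c}" unfolding crosses_iff using wout pc' xq' cx by auto
          then have H1: "rel FF w x q c" using rel2[OF w2 cx2(2) pq(2) cx2(1)] qp pc' by simp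
          show ?thesis using alg_qx[OF FF_sym H1 Hi Hq] pc' by simp
        next
          case False
          then have pc': "p < c" using pc by simp
          have Hp: "rel FF p i x c" using PE'[OF i pr(3)] pc' by simp
          have "crosses {w,x} {q,p}" unfolding crosses_iff using wout pc' xq' cx by auto
          then have H1: "rel FF w x q p" using rel2[OF w2 cx2(2) pq(2) pq(1)] qp by simp
          have "crosses {w,c} {q,p}" unfolding crosses_iff using wout pc' xq' cx by auto
          then have H2: "rel FF w c q p" using rel2[OF w2 cx2(1) pq(2) pq(1)] qp by simp
          show ?thesis using alg_full[OF FF_sym H1 H2 Hi Hp Hq] .
        qed
      qed
      then show ?thesis using sw2 by blast
    qed
  qed
  then show ?thesis using sw1 by blast
qed


lemma in1: "u \<in> V1 \<Longrightarrow> v \<in> V1 \<Longrightarrow> u \<noteq> v \<Longrightarrow> {u,v} \<in> diags V1"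
  unfolding diags_def by blast
lemma in2: "u \<in> V2 \<Longrightarrow> v \<in> V2 \<Longrightarrow> u \<noteq> v \<Longrightarrow> {u,v} \<in> diags V2"
  unfolding diags_def by blast

lemma inout:
  assumes "a \<in> V" "b \<in> V" "\<not> {a,b} \<subseteq> V1" "\<not> {a,b} \<subseteq> V2"
  shows "(c < a \<and> a < x \<and> (b < c \<or> x < b)) \<or> (c < b \<and> b < x \<and> (a < c \<or> x < a))"
  using assms by (auto simp: V1_eq V2_eq)

lemma mixed_reduce:
  assumes ab: "a \<in> V" "b \<in> V" "\<not> {a,b} \<subseteq> V1" "\<not> {a,b} \<subseteq> V2"
    and cr: "crosses {a,b} {p,q}"
    and K: "\<And>i w. i \<in> V \<Longrightarrow> c < i \<Longrightarrow> i < x \<Longrightarrow> w \<in> V \<Longrightarrow> w < c \<or> x < w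
             \<Longrightarrow> crosses {i,w} {p,q} \<Longrightarrow> rel FF i w p q"
  shows "rel FF a b p q"
proof -
  from inout[OF ab] show ?thesis
  proof
    assume h: "c < a \<and> a < x \<and> (b < c \<or> x < b)"
    show ?thesis using K[OF ab(1) _ _ ab(2) _ cr] h by blast
  next
    assume h: "c < b \<and> b < x \<and> (a < c \<or> x < a)"
    have "crosses {b,a} {p,q}" using cr by (simp add: insert_commute)
    then have "rel FF b a p q" using K[OF ab(2) _ _ ab(1)] h by blast
    then show ?thesis using sw1 by blast
  qed
qed

lemma relD_ord:
  assumes V: "a \<in> V" "b \<in> V" "p \<in> V" "q \<in> V" and pq: "p < q"
    and cr: "crosses {a,b} {p,q}" and D: "{p,q} \<in> insert {c,x} (D1 \<union> D2)"
  shows "rel FF a b p q"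
proof (cases "{p,q} = {c,x}")
  case True
  then have pc: "p = c" "q = x" using pq cx by (auto simp: doubleton_eq_iff)
  have n1: "\<not> {a,b} \<subseteq> V1" using cr pc by (auto simp: V1_eq crosses_iff)
  have n2: "\<not> {a,b} \<subseteq> V2" using cr pc cx by (auto simp: V2_eq crosses_iff)
  show ?thesis using mixed_reduce[OF V(1,2) n1 n2 cr] PE pc by blast
next
  case ne: False
  then have D12: "{p,q} \<in> D1 \<or> {p,q} \<in> D2" using D by blast
  then show ?thesis
  proof
    assume d1: "{p,q} \<in> D1"
    then have pq1: "p \<in> V1" "q \<in> V1" using D1 by auto
    show ?thesis
    proof (cases "{a,b} \<subseteq> V1")
      case True then show ?thesis using rel1 pq1 cr d1 by auto
    next
      case n1: False
      have n2: "\<not> {a,b} \<subseteq> V2"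
      proof
        assume "{a,b} \<subseteq> V2"
        then have "a \<le> c \<or> x \<le> a" "b \<le> c \<or> x \<le> b" by (auto simp: V2_eq)
        moreover have "c \<le> p" "q \<le> x" using pq1 by (auto simp: V1_eq)
        ultimately show False using cr pq unfolding crosses_iff by auto
      qed
      show ?thesis using mixed_reduce[OF V(1,2) n1 n2 cr] core1[OF _ _ _ _ _ pq1 pq d1 ne] by blast
    qed
  next
    assume d2: "{p,q} \<in> D2"
    then have pq2: "p \<in> V2" "q \<in> V2" using D2 by auto
    show ?thesis
    proof (cases "{a,b} \<subseteq> V2")
      case True then show ?thesis using rel2 pq2 cr d2 by auto
    next
      case n2: False
      have n1: "\<not> {a,b} \<subseteq> V1"
      proof
        assume "{a,b} \<subseteq> V1"
        then have "c \<le> a" "a \<le> x" "c \<le> b" "b \<le> x" by (auto simp: V1_eq)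
        moreover have "p \<le> c \<or> x \<le> p" "q \<le> c \<or> x \<le> q" using pq2 by (auto simp: V2_eq)
        ultimately show False using cr pq unfolding crosses_iff by auto
      qed
      show ?thesis using mixed_reduce[OF V(1,2) n1 n2 cr] core2[OF _ _ _ _ _ pq2 pq d2 ne] by blast
    qed
  qed
qed

lemma relD:
  assumes V: "a \<in> V" "b \<in> V" "p \<in> V" "q \<in> V"
    and cr: "crosses {a,b} {p,q}" and D: "{p,q} \<in> insert {c,x} (D1 \<union> D2)"
  shows "rel FF a b p q"
proof -
  have "p \<noteq> q" using crosses_distinct[OF cr] by blast
  then consider "p < q" | "q < p" by linarith
  then show ?thesis
  proof cases
    case 1 then show ?thesis using relD_ord[OF V] cr D by blast
  next
    case 2
    have "crosses {a,b} {q,p}" "{q,p} \<in> insert {c,x} (D1 \<union> D2)"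
      using cr D by (simp_all add: insert_commute)
    then have "rel FF a b q p" using relD_ord[OF V(1,2,4,3) 2] by blast
    then show ?thesis using sw2 by blast
  qed
qed

lemma gf_wf: "weak_frieze V (insert {c,x} (D1 \<union> D2)) gf"
  unfolding weak_frieze_def
proof (intro allI impI)
  fix a b p q
  assume h: "a \<in> V" "b \<in> V" "p \<in> V" "q \<in> V" "crosses {a,b} {p,q}" "{p,q} \<in> insert {c,x} (D1 \<union> D2)"
  show "gf {a,b} * gf {p,q} = gf {a,p} * gf {b,q} + gf {a,q} * gf {b,p}"
    using relD[OF h] unfolding rel_def .
qed

lemma gf_agree1: "\<forall>d\<in>diags V1. gf d = f1 d" using ag1d by blast
lemma gf_agree2: "\<forall>d\<in>diags V2. gf d = f2 d" using ag2d by blast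

lemma gf_uniq:
  assumes ge: "g \<in> extensional (diags V)" and gw: "weak_frieze V (insert {c,x} (D1 \<union> D2)) g"
    and g1: "\<forall>d\<in>diags V1. g d = f1 d" and g2: "\<forall>d\<in>diags V2. g d = f2 d"
  shows "g = gf"
proof
  fix d
  show "g d = gf d"
  proof (cases "d \<in> diags V")
    case False
    then show ?thesis using ge gf_ext unfolding extensional_def by auto
  next
    case True
    show ?thesis
    proof (cases "d \<in> diags V1 \<or> d \<in> diags V2")
      case True
      then show ?thesis using g1 g2 gf_agree1 gf_agree2 by auto
    next
      case False
      obtain a b where ab: "a < b" "a \<in> V" "b \<in> V" "d = {a,b}" using True unfolding diags_iff by blast
      have n1: "\<not> {a,b} \<subseteq> V1" using False ab diags_pair[OF ab(1)] by auto
      have n2: "\<not> {a,b} \<subseteq> V2" using False ab diags_pair[OF ab(1)] by auto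
      have key: "g {i,w} = gf {i,w}" if i: "i \<in> V" "c < i" "i < x" and w: "w \<in> V" "w < c \<or> x < w" for i w
      proof -
        have i1: "i \<in> V1" using i by (auto simp: V1_eq)
        have w2: "w \<in> V2" using w by (auto simp: V2_eq)
        have cr: "crosses {i,w} {c,x}" unfolding crosses_iff using i w by auto
        have REL: "g {i,w} * g {c,x} = g {i,c} * g {w,x} + g {i,x} * g {w,c}"
          using gw i(1) w(1) cxV cr unfolding weak_frieze_def by blast
        have m1: "{c,x} \<in> diags V1" "{i,c} \<in> diags V1" "{i,x} \<in> diags V1"
          using in1 cx1 i1 i cx by auto
        have m2: "{w,x} \<in> diags V2" "{w,c} \<in> diags V2"
          using in2 cx2 w2 w cx by auto
        moreover have "g {c,x} = gf {c,x}" "g {i,c} = gf {i,c}" "g {i,x} = gf {i,x}"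
          using g1 gf_agree1 m1 by metis+
        moreover have "g {w,x} = gf {w,x}" "g {w,c} = gf {w,c}"
          using g2 gf_agree2 m2 by metis+
        ultimately have "g {i,w} * gf {c,x} = gf {i,w} * gf {c,x}"
          using PE[OF i w] REL unfolding rel_def by simp
        then show ?thesis by (rule sf_cancel)
      qed
      from inout[OF ab(2,3) n1 n2] show ?thesis
      proof
        assume "c < a \<and> a < x \<and> (b < c \<or> x < b)"
        then show ?thesis using key ab by blast
      next
        assume "c < b \<and> b < x \<and> (a < c \<or> x < a)"
        then have "g {b,a} = gf {b,a}" using key ab by blast
        then show ?thesis using ab by (simp add: insert_commute)
      qed
    qed
  qed
qed

end


lemma cut_intro_defs:
  assumes "polygon V" "dissection V E" "{c,x} \<in> E" "c < x"
  shows "cut V E c x {v\<in>V. c \<le> v \<and> v \<le> x} {v\<in>V. v \<le> c \<or> x \<le> v}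
     {d\<in>E. d \<subseteq> {v\<in>V. c \<le> v \<and> v \<le> x} \<and> d \<noteq> {c,x}}
     {d\<in>E. d \<subseteq> {v\<in>V. v \<le> c \<or> x \<le> v} \<and> d \<noteq> {c,x}}"
  using assms by (intro cut.intro) simp_all

lemma obtain_e:
  assumes "dissection V E" "E \<noteq> {}"
  obtains c x where "{c,x} \<in> E" "c < x"
proof -
  obtain e where eE: "e \<in> E" using assms(2) by blast
  then have "e \<in> internal_diags V" using assms(1) unfolding dissection_def by auto
  then obtain c x where "c < x" "e = {c,x}" unfolding internal_diags_def diags_iff by blast
  then show ?thesis using that eE by blast
qed

lemma cells_disj:
  "polygon V \<Longrightarrow> dissection V E \<Longrightarrow> S \<in> cells V E \<Longrightarrow> S' \<in> cells V E \<Longrightarrow> S \<noteq> S'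
   \<Longrightarrow> d \<in> internal_diags S \<Longrightarrow> d' \<in> internal_diags S' \<Longrightarrow> d \<noteq> d' \<and> \<not> crosses d d'"
proof (induction "card E" arbitrary: V E S S' d d' rule: less_induct)
  case less
  show ?case
  proof (cases "E = {}")
    case True
    then show ?thesis using less.prems cells_empty by auto
  next
    case False
    obtain c x where eE: "{c,x} \<in> E" and cx: "c < x" using obtain_e[OF less.prems(2) False] by blast
    define V1 where "V1 = {v\<in>V. c \<le> v \<and> v \<le> x}"
    define V2 where "V2 = {v\<in>V. v \<le> c \<or> x \<le> v}"
    define E1 where "E1 = {d\<in>E. d \<subseteq> V1 \<and> d \<noteq> {c,x}}"
    define E2 where "E2 = {d\<in>E. d \<subseteq> V2 \<and> d \<noteq> {c,x}}"
    interpret cut V E c x V1 V2 E1 E2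
      unfolding V1_def V2_def E1_def E2_def by (rule cut_intro_defs[OF less.prems(1,2) eE cx])
    have S: "S \<in> cells V1 E1 \<or> S \<in> cells V2 E2" using less.prems(3) cells_split by blast
    have S': "S' \<in> cells V1 E1 \<or> S' \<in> cells V2 E2" using less.prems(4) cells_split by blast
    show ?thesis
    proof (cases "S \<in> cells V1 E1")
      case S1: True
      show ?thesis
      proof (cases "S' \<in> cells V1 E1")
        case True
        then show ?thesis using less.hyps[OF card1 pol1 dis1 S1 True less.prems(5-7)] by blast
      next
        case False
        then have "S' \<in> cells V2 E2" using S' by blast
        then show ?thesis using mixed_sep[OF S1 _ less.prems(6,7)] by blast
      qed
    next
      case S1: False
      then have S2: "S \<in> cells V2 E2" using S by blast
      show ?thesis
      proof (cases "S' \<in> cells V2 E2")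
        case True
        then show ?thesis using less.hyps[OF card2 pol2 dis2 S2 True less.prems(5-7)] by blast
      next
        case False
        then have "S' \<in> cells V1 E1" using S' by blast
        then show ?thesis using mixed_sep[OF _ S2 less.prems(7,6)] by blast
      qed
    qed
  qed
qed

lemma edge_cell:
  "polygon V \<Longrightarrow> dissection V E \<Longrightarrow> is_edge V g \<Longrightarrow> \<exists>S\<in>cells V E. g \<in> diags S"
proof (induction "card E" arbitrary: V E rule: less_induct)
  case less
  show ?case
  proof (cases "E = {}")
    case True
    then show ?thesis using less.prems cells_empty edge_in_diags by auto
  next
    case False
    obtain c x where eE: "{c,x} \<in> E" and cx: "c < x" using obtain_e[OF less.prems(2) False] by blast
    define V1 where "V1 = {v\<in>V. c \<le> v \<and> v \<le> x}"
    define V2 where "V2 = {v\<in>V. v \<le> c \<or> x \<le> v}"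
    define E1 where "E1 = {d\<in>E. d \<subseteq> V1 \<and> d \<noteq> {c,x}}"
    define E2 where "E2 = {d\<in>E. d \<subseteq> V2 \<and> d \<noteq> {c,x}}"
    interpret cut V E c x V1 V2 E1 E2
      unfolding V1_def V2_def E1_def E2_def by (rule cut_intro_defs[OF less.prems(1,2) eE cx])
    from edge_side[OF less.prems(3)] show ?thesis
    proof
      assume "g \<subseteq> V1"
      then have "is_edge V1 g" using edge_sub[OF V1_sub less.prems(3)] by blast
      then obtain S where "S \<in> cells V1 E1" "g \<in> diags S" using less.hyps[OF card1 pol1 dis1] by blast
      then show ?thesis using cells_from1 by blast
    next
      assume "g \<subseteq> V2"
      then have "is_edge V2 g" using edge_sub[OF V2_sub less.prems(3)] by blast
      then obtain S where "S \<in> cells V2 E2" "g \<in> diags S" using less.hyps[OF card2 pol2 dis2] by blast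
      then show ?thesis using cells_from2 by blast
    qed
  qed
qed

lemma E_Ds_nc:
  assumes pol: "polygon V" and dis: "dissection V E" and eE: "e \<in> E" and S: "S \<in> cells V E"
    and d: "d \<in> internal_diags S"
  shows "\<not> crosses d e"
proof
  assume cr0: "crosses d e"
  have SV: "S \<subseteq> V" and ed: "\<And>g. is_edge S g \<Longrightarrow> is_edge V g \<or> g \<in> E"
    and ni: "\<And>e. e \<in> E \<Longrightarrow> e \<notin> internal_diags S"
    using S unfolding cells_def subpolygon_def by auto
  have finS: "finite S" using SV pol finite_subset unfolding polygon_def by blast
  have "e \<in> internal_diags V" using dis eE unfolding dissection_def by auto
  then obtain c x where cx: "c < x" "e = {c,x}" "c \<in> V" "x \<in> V"
    unfolding internal_diags_def diags_iff by blast
  obtain a b where ab: "a < b" "d = {a,b}" "a \<in> S" "b \<in> S"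
    using d unfolding internal_diags_def diags_iff by blast
  have cr: "crosses {a,b} {c,x}" using cr0 ab cx by simp
  have io: "(c < a \<and> a < x \<and> (b < c \<or> x < b)) \<or> (c < b \<and> b < x \<and> (a < c \<or> x < a))"
    using cr ab(1) cx(1) unfolding crosses_iff by auto
  then obtain u w where u: "u \<in> S" "c < u" "u < x" and w: "w \<in> S" "w < c \<or> x < w"
    using ab by blast
  show False
  proof (cases "c \<in> S \<and> x \<in> S")
    case True
    then have "{c,x} \<in> internal_diags S" using internal_e[OF cx(1) _ _ u w] by blast
    then show False using ni eE cx by blast
  next
    case False
    then obtain g where g: "is_edge S g" "crosses g {c,x}"
      using side_edge[OF finS cx(1) u w] by blast
    from ed[OF g(1)] show False
    proof
      assume "is_edge V g" then show False using edge_no_cross g(2) cx by blast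
    next
      assume "g \<in> E" then show False using dis eE cx g(2) unfolding dissection_def by blast
    qed
  qed
qed


lemma ex1_uniq: "\<exists>!x. P x \<Longrightarrow> P a \<Longrightarrow> P b \<Longrightarrow> a = b"
  by blast

lemma frieze_ex:
  fixes Ds :: "nat set \<Rightarrow> nat set set" and fs :: "nat set \<Rightarrow> nat set \<Rightarrow> 'k::semifield"
  shows "polygon V \<Longrightarrow> dissection V E \<Longrightarrow> \<forall>S\<in>cells V E. dissection S (Ds S)
    \<Longrightarrow> \<forall>S\<in>cells V E. weak_frieze S (Ds S) (fs S)
    \<Longrightarrow> \<forall>S\<in>cells V E. \<forall>S'\<in>cells V E. \<forall>d\<in>diags S \<inter> diags S'. fs S d = fs S' d
    \<Longrightarrow> \<exists>!f. f \<in> extensional (diags V)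
                 \<and> weak_frieze V (E \<union> (\<Union>S\<in>cells V E. Ds S)) f
                 \<and> (\<forall>S\<in>cells V E. \<forall>d\<in>diags S. f d = fs S d)"
proof (induction "card E" arbitrary: V E rule: less_induct)
  case less
  show ?case
  proof (cases "E = {}")
    case True
    have cV: "cells V E = {V}" using True cells_empty less.prems(1) by simp
    have wV: "weak_frieze V (Ds V) (fs V)" using less.prems(4) cV by simp
    define f0 where "f0 = restrict (fs V) (diags V)"
    have P0: "f0 \<in> extensional (diags V) \<and> weak_frieze V (E \<union> (\<Union>S\<in>cells V E. Ds S)) f0
                 \<and> (\<forall>S\<in>cells V E. \<forall>d\<in>diags S. f0 d = fs S d)"
    proof (intro conjI)
      show "f0 \<in> extensional (diags V)" unfolding f0_def by (rule restrict_extensional)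
      show "\<forall>S\<in>cells V E. \<forall>d\<in>diags S. f0 d = fs S d" unfolding f0_def cV by simp
      show "weak_frieze V (E \<union> (\<Union>S\<in>cells V E. Ds S)) f0"
        unfolding weak_frieze_def
      proof (intro allI impI)
        fix a b p q
        assume h: "a \<in> V" "b \<in> V" "p \<in> V" "q \<in> V" "crosses {a,b} {p,q}"
          "{p,q} \<in> E \<union> (\<Union>S\<in>cells V E. Ds S)"
        have dist: "a \<noteq> b \<and> a \<noteq> p \<and> a \<noteq> q \<and> b \<noteq> p \<and> b \<noteq> q \<and> p \<noteq> q"
          using crosses_distinct[OF h(5)] .
        have "{p,q} \<in> Ds V" using h(6) True cV by simp
        then have "fs V {a,b} * fs V {p,q} = fs V {a,p} * fs V {b,q} + fs V {a,q} * fs V {b,p}"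
          using wV h unfolding weak_frieze_def by blast
        moreover have "\<And>u v. u \<in> V \<Longrightarrow> v \<in> V \<Longrightarrow> u \<noteq> v \<Longrightarrow> f0 {u,v} = fs V {u,v}"
          unfolding f0_def diags_def by auto
        ultimately show "f0 {a,b} * f0 {p,q} = f0 {a,p} * f0 {b,q} + f0 {a,q} * f0 {b,p}"
          using h dist by simp
      qed
    qed
    show ?thesis
    proof (rule ex1I[of _ f0])
      show "f0 \<in> extensional (diags V) \<and> weak_frieze V (E \<union> (\<Union>S\<in>cells V E. Ds S)) f0
                 \<and> (\<forall>S\<in>cells V E. \<forall>d\<in>diags S. f0 d = fs S d)" using P0 .
    next
      fix g
      assume g: "g \<in> extensional (diags V) \<and> weak_frieze V (E \<union> (\<Union>S\<in>cells V E. Ds S)) g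
                 \<and> (\<forall>S\<in>cells V E. \<forall>d\<in>diags S. g d = fs S d)"
      show "g = f0"
      proof
        fix d show "g d = f0 d"
          using g cV unfolding f0_def extensional_def by (cases "d \<in> diags V") auto
      qed
    qed
  next
    case False
    obtain c x where eE: "{c,x} \<in> E" and cx: "c < x" using obtain_e[OF less.prems(2) False] by blast
    define V1 where "V1 = {v\<in>V. c \<le> v \<and> v \<le> x}"
    define V2 where "V2 = {v\<in>V. v \<le> c \<or> x \<le> v}"
    define E1 where "E1 = {d\<in>E. d \<subseteq> V1 \<and> d \<noteq> {c,x}}"
    define E2 where "E2 = {d\<in>E. d \<subseteq> V2 \<and> d \<noteq> {c,x}}"
    interpret cut V E c x V1 V2 E1 E2
      unfolding V1_def V2_def E1_def E2_def by (rule cut_intro_defs[OF less.prems(1,2) eE cx])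
    define D1 where "D1 = E1 \<union> (\<Union>S\<in>cells V1 E1. Ds S)"
    define D2 where "D2 = E2 \<union> (\<Union>S\<in>cells V2 E2. Ds S)"
    have c1: "cells V1 E1 \<subseteq> cells V E" using cells_from1 by blast
    have c2: "cells V2 E2 \<subseteq> cells V E" using cells_from2 by blast
    have ex1: "\<exists>!f. f \<in> extensional (diags V1) \<and> weak_frieze V1 D1 f
                 \<and> (\<forall>S\<in>cells V1 E1. \<forall>d\<in>diags S. f d = fs S d)"
      unfolding D1_def
      by (rule less.hyps[OF card1 pol1 dis1]) (use less.prems(3-5) c1 in blast)+
    have ex2: "\<exists>!f. f \<in> extensional (diags V2) \<and> weak_frieze V2 D2 f
                 \<and> (\<forall>S\<in>cells V2 E2. \<forall>d\<in>diags S. f d = fs S d)"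
      unfolding D2_def
      by (rule less.hyps[OF card2 pol2 dis2]) (use less.prems(3-5) c2 in blast)+
    obtain f1 where f1c: "f1 \<in> extensional (diags V1) \<and> weak_frieze V1 D1 f1
                 \<and> (\<forall>S\<in>cells V1 E1. \<forall>d\<in>diags S. f1 d = fs S d)" using ex1 by (rule ex1E)
    then have f1: "f1 \<in> extensional (diags V1)" "weak_frieze V1 D1 f1"
      "\<forall>S\<in>cells V1 E1. \<forall>d\<in>diags S. f1 d = fs S d" by blast+
    obtain f2 where f2c: "f2 \<in> extensional (diags V2) \<and> weak_frieze V2 D2 f2
                 \<and> (\<forall>S\<in>cells V2 E2. \<forall>d\<in>diags S. f2 d = fs S d)" using ex2 by (rule ex1E)
    then have f2: "f2 \<in> extensional (diags V2)" "weak_frieze V2 D2 f2"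
      "\<forall>S\<in>cells V2 E2. \<forall>d\<in>diags S. f2 d = fs S d" by blast+
    have D1s: "\<forall>d\<in>D1. d \<subseteq> V1"
    proof
      fix d assume "d \<in> D1"
      then consider "d \<in> E1" | S where "S \<in> cells V1 E1" "d \<in> Ds S" unfolding D1_def by blast
      then show "d \<subseteq> V1"
      proof cases
        case 1 then show ?thesis by (simp add: E1_eq)
      next
        case 2
        then have "d \<in> internal_diags S" using less.prems(3) c1 unfolding dissection_def by blast
        then have "d \<subseteq> S" by (rule internal_subset)
        moreover have "S \<subseteq> V1" using 2 unfolding cells_def subpolygon_def by blast
        ultimately show ?thesis by blast
      qed
    qed
    have D2s: "\<forall>d\<in>D2. d \<subseteq> V2"
    proof
      fix d assume "d \<in> D2"
      then consider "d \<in> E2" | S where "S \<in> cells V2 E2" "d \<in> Ds S" unfolding D2_def by blast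
      then show "d \<subseteq> V2"
      proof cases
        case 1 then show ?thesis by (simp add: E2_eq)
      next
        case 2
        then have "d \<in> internal_diags S" using less.prems(3) c2 unfolding dissection_def by blast
        then have "d \<subseteq> S" by (rule internal_subset)
        moreover have "S \<subseteq> V2" using 2 unfolding cells_def subpolygon_def by blast
        ultimately show ?thesis by blast
      qed
    qed
    have agree: "f1 {c,x} = f2 {c,x}"
    proof -
      obtain S1 where S1: "S1 \<in> cells V1 E1" "{c,x} \<in> diags S1"
        using edge_cell[OF pol1 dis1 edge1] by blast
      obtain S2 where S2: "S2 \<in> cells V2 E2" "{c,x} \<in> diags S2"
        using edge_cell[OF pol2 dis2 edge2] by blast
      have "f1 {c,x} = fs S1 {c,x}" using f1(3) S1 by blast
      also have "\<dots> = fs S2 {c,x}" using less.prems(5) S1 S2 c1 c2 by blast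
      also have "\<dots> = f2 {c,x}" using f2(3) S2 by simp
      finally show ?thesis .
    qed
    interpret gl: glue V c x V1 V2 D1 D2 f1 f2
      by (rule glue.intro) (use cx cxV D1s D2s f1(2) f2(2) agree in \<open>simp_all add: V1_eq V2_eq\<close>)
    have DD: "E \<union> (\<Union>S\<in>cells V E. Ds S) = insert {c,x} (D1 \<union> D2)"
    proof -
      have "E \<union> (\<Union>S\<in>cells V E. Ds S) = insert {c,x} (E1 \<union> E2) \<union> (\<Union>S\<in>cells V1 E1 \<union> cells V2 E2. Ds S)"
        using E_split cells_split by simp
      then show ?thesis unfolding D1_def D2_def by blast
    qed
    show ?thesis
    proof (rule ex1I[of _ gl.gf])
      show "gl.gf \<in> extensional (diags V) \<and> weak_frieze V (E \<union> (\<Union>S\<in>cells V E. Ds S)) gl.gf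
                 \<and> (\<forall>S\<in>cells V E. \<forall>d\<in>diags S. gl.gf d = fs S d)"
      proof (intro conjI)
        show "gl.gf \<in> extensional (diags V)" by (rule gl.gf_ext)
        show "weak_frieze V (E \<union> (\<Union>S\<in>cells V E. Ds S)) gl.gf" unfolding DD by (rule gl.gf_wf)
        show "\<forall>S\<in>cells V E. \<forall>d\<in>diags S. gl.gf d = fs S d"
        proof (intro ballI)
          fix S d assume S: "S \<in> cells V E" and d: "d \<in> diags S"
          from S cells_split have "S \<in> cells V1 E1 \<or> S \<in> cells V2 E2" by blast
          then show "gl.gf d = fs S d"
          proof
            assume S1: "S \<in> cells V1 E1"
            then have "S \<subseteq> V1" unfolding cells_def subpolygon_def by blast
            then have "d \<in> diags V1" using d diags_mono by blast
            then show ?thesis using gl.ag1d f1(3) S1 d by simp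
          next
            assume S2: "S \<in> cells V2 E2"
            then have "S \<subseteq> V2" unfolding cells_def subpolygon_def by blast
            then have "d \<in> diags V2" using d diags_mono by blast
            then show ?thesis using gl.ag2d f2(3) S2 d by simp
          qed
        qed
      qed
    next
      fix g
      assume g: "g \<in> extensional (diags V) \<and> weak_frieze V (E \<union> (\<Union>S\<in>cells V E. Ds S)) g
                 \<and> (\<forall>S\<in>cells V E. \<forall>d\<in>diags S. g d = fs S d)"
      have gw: "weak_frieze V (insert {c,x} (D1 \<union> D2)) g" using g DD by simp
      have r1: "restrict g (diags V1) = f1"
      proof -
        have "restrict g (diags V1) \<in> extensional (diags V1) \<and> weak_frieze V1 D1 (restrict g (diags V1))
                 \<and> (\<forall>S\<in>cells V1 E1. \<forall>d\<in>diags S. restrict g (diags V1) d = fs S d)"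
        proof (intro conjI)
          show "restrict g (diags V1) \<in> extensional (diags V1)" by (rule restrict_extensional)
          show "\<forall>S\<in>cells V1 E1. \<forall>d\<in>diags S. restrict g (diags V1) d = fs S d"
          proof (intro ballI)
            fix S d assume S1: "S \<in> cells V1 E1" and d: "d \<in> diags S"
            then have "S \<subseteq> V1" unfolding cells_def subpolygon_def by blast
            then have "d \<in> diags V1" using d diags_mono by blast
            then show "restrict g (diags V1) d = fs S d" using g S1 c1 d by auto
          qed
          show "weak_frieze V1 D1 (restrict g (diags V1))"
            unfolding weak_frieze_def
          proof (intro allI impI)
            fix a b p q
            assume h: "a \<in> V1" "b \<in> V1" "p \<in> V1" "q \<in> V1" "crosses {a,b} {p,q}" "{p,q} \<in> D1"
            have dist: "a \<noteq> b \<and> a \<noteq> p \<and> a \<noteq> q \<and> b \<noteq> p \<and> b \<noteq> q \<and> p \<noteq> q"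
              using crosses_distinct[OF h(5)] .
            have hV: "a \<in> V" "b \<in> V" "p \<in> V" "q \<in> V" using h V1_sub by auto
            have "g {a,b} * g {p,q} = g {a,p} * g {b,q} + g {a,q} * g {b,p}"
              using gw hV h(5,6) unfolding weak_frieze_def by blast
            moreover have "\<And>u v. u \<in> V1 \<Longrightarrow> v \<in> V1 \<Longrightarrow> u \<noteq> v \<Longrightarrow> restrict g (diags V1) {u,v} = g {u,v}"
              unfolding diags_def by auto
            ultimately show "restrict g (diags V1) {a,b} * restrict g (diags V1) {p,q} =
              restrict g (diags V1) {a,p} * restrict g (diags V1) {b,q} + restrict g (diags V1) {a,q} * restrict g (diags V1) {b,p}"
              using h dist by simp
          qed
        qed
        then show ?thesis using f1c by (rule ex1_uniq[OF ex1])
      qed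
      have r2: "restrict g (diags V2) = f2"
      proof -
        have "restrict g (diags V2) \<in> extensional (diags V2) \<and> weak_frieze V2 D2 (restrict g (diags V2))
                 \<and> (\<forall>S\<in>cells V2 E2. \<forall>d\<in>diags S. restrict g (diags V2) d = fs S d)"
        proof (intro conjI)
          show "restrict g (diags V2) \<in> extensional (diags V2)" by (rule restrict_extensional)
          show "\<forall>S\<in>cells V2 E2. \<forall>d\<in>diags S. restrict g (diags V2) d = fs S d"
          proof (intro ballI)
            fix S d assume S2: "S \<in> cells V2 E2" and d: "d \<in> diags S"
            then have "S \<subseteq> V2" unfolding cells_def subpolygon_def by blast
            then have "d \<in> diags V2" using d diags_mono by blast
            then show "restrict g (diags V2) d = fs S d" using g S2 c2 d by auto
          qed
          show "weak_frieze V2 D2 (restrict g (diags V2))"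
            unfolding weak_frieze_def
          proof (intro allI impI)
            fix a b p q
            assume h: "a \<in> V2" "b \<in> V2" "p \<in> V2" "q \<in> V2" "crosses {a,b} {p,q}" "{p,q} \<in> D2"
            have dist: "a \<noteq> b \<and> a \<noteq> p \<and> a \<noteq> q \<and> b \<noteq> p \<and> b \<noteq> q \<and> p \<noteq> q"
              using crosses_distinct[OF h(5)] .
            have hV: "a \<in> V" "b \<in> V" "p \<in> V" "q \<in> V" using h V2_sub by auto
            have "g {a,b} * g {p,q} = g {a,p} * g {b,q} + g {a,q} * g {b,p}"
              using gw hV h(5,6) unfolding weak_frieze_def by blast
            moreover have "\<And>u v. u \<in> V2 \<Longrightarrow> v \<in> V2 \<Longrightarrow> u \<noteq> v \<Longrightarrow> restrict g (diags V2) {u,v} = g {u,v}"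
              unfolding diags_def by auto
            ultimately show "restrict g (diags V2) {a,b} * restrict g (diags V2) {p,q} =
              restrict g (diags V2) {a,p} * restrict g (diags V2) {b,q} + restrict g (diags V2) {a,q} * restrict g (diags V2) {b,p}"
              using h dist by simp
          qed
        qed
        then show ?thesis using f2c by (rule ex1_uniq[OF ex2])
      qed
      have g1: "\<forall>d\<in>diags V1. g d = f1 d" using r1 by (metis restrict_apply')
      have g2: "\<forall>d\<in>diags V2. g d = f2 d" using r2 by (metis restrict_apply')
      show "g = gl.gf" using gl.gf_uniq g gw g1 g2 by blast
    qed
  qed
qed

theorem theoremB:
  fixes V :: "nat set" and E :: "nat set set"
    and Ds :: "nat set \<Rightarrow> nat set set"
    and fs :: "nat set \<Rightarrow> nat set \<Rightarrow> 'k::semifield"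
  assumes "polygon V"
    and "dissection V E"
    and "\<forall>S\<in>cells V E. dissection S (Ds S)"
  shows "dissection V (E \<union> (\<Union>S\<in>cells V E. Ds S))
     \<and> (\<forall>S\<in>cells V E. E \<inter> Ds S = {})
     \<and> (\<forall>S\<in>cells V E. \<forall>S'\<in>cells V E. S \<noteq> S' \<longrightarrow> Ds S \<inter> Ds S' = {})
     \<and> ((\<forall>S\<in>cells V E. weak_frieze S (Ds S) (fs S))
        \<longrightarrow> (\<forall>S\<in>cells V E. \<forall>S'\<in>cells V E. \<forall>d\<in>diags S \<inter> diags S'. fs S d = fs S' d)
        \<longrightarrow> (\<exists>!f. f \<in> extensional (diags V)
                 \<and> weak_frieze V (E \<union> (\<Union>S\<in>cells V E. Ds S)) f
                 \<and> (\<forall>S\<in>cells V E. \<forall>d\<in>diags S. f d = fs S d)))"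
proof (intro conjI impI)
  have SV: "\<And>S. S \<in> cells V E \<Longrightarrow> S \<subseteq> V" unfolding cells_def subpolygon_def by blast
  have DsI: "\<And>S d. S \<in> cells V E \<Longrightarrow> d \<in> Ds S \<Longrightarrow> d \<in> internal_diags S"
    using assms(3) unfolding dissection_def by blast
  have EI: "E \<subseteq> internal_diags V" using assms(2) unfolding dissection_def by blast
  have Enc: "\<And>d e. d \<in> E \<Longrightarrow> e \<in> E \<Longrightarrow> \<not> crosses d e" using assms(2) unfolding dissection_def by blast
  have Dsnc: "\<And>S d e. S \<in> cells V E \<Longrightarrow> d \<in> Ds S \<Longrightarrow> e \<in> Ds S \<Longrightarrow> \<not> crosses d e"
    using assms(3) unfolding dissection_def by blast
  show "dissection V (E \<union> (\<Union>S\<in>cells V E. Ds S))"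
    unfolding dissection_def
  proof (intro conjI ballI)
    show "E \<union> (\<Union>S\<in>cells V E. Ds S) \<subseteq> internal_diags V"
    proof
      fix d assume "d \<in> E \<union> (\<Union>S\<in>cells V E. Ds S)"
      then consider "d \<in> E" | S where "S \<in> cells V E" "d \<in> Ds S" by blast
      then show "d \<in> internal_diags V"
      proof cases
        case 1 then show ?thesis using EI by blast
      next
        case 2 then show ?thesis using internal_sub[OF SV[OF 2(1)] DsI[OF 2]] by blast
      qed
    qed
  next
    fix d e assume d: "d \<in> E \<union> (\<Union>S\<in>cells V E. Ds S)" and e: "e \<in> E \<union> (\<Union>S\<in>cells V E. Ds S)"
    show "\<not> crosses d e"
    proof (cases "d \<in> E")
      case dE: True
      show ?thesis
      proof (cases "e \<in> E")
        case True then show ?thesis using Enc dE by blast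
      next
        case False
        then obtain S where S: "S \<in> cells V E" "e \<in> Ds S" using e by blast
        have "\<not> crosses e d" using E_Ds_nc[OF assms(1,2) dE S(1) DsI[OF S]] .
        then show ?thesis using crosses_sym by blast
      qed
    next
      case dnE: False
      then obtain S where S: "S \<in> cells V E" "d \<in> Ds S" using d by blast
      show ?thesis
      proof (cases "e \<in> E")
        case True then show ?thesis using E_Ds_nc[OF assms(1,2) True S(1) DsI[OF S]] by blast
      next
        case False
        then obtain S' where S': "S' \<in> cells V E" "e \<in> Ds S'" using e by blast
        show ?thesis
        proof (cases "S = S'")
          case True then show ?thesis using Dsnc S S' by blast
        next
          case False
          then show ?thesis using cells_disj[OF assms(1,2) S(1) S'(1) False DsI[OF S] DsI[OF S']] by blast
        qed
      qed
    qed
  qed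
  show "\<forall>S\<in>cells V E. E \<inter> Ds S = {}"
  proof (intro ballI)
    fix S assume S: "S \<in> cells V E"
    have "\<And>e. e \<in> E \<Longrightarrow> e \<notin> internal_diags S" using S unfolding cells_def by blast
    then show "E \<inter> Ds S = {}" using DsI[OF S] by blast
  qed
  show "\<forall>S\<in>cells V E. \<forall>S'\<in>cells V E. S \<noteq> S' \<longrightarrow> Ds S \<inter> Ds S' = {}"
  proof (intro ballI impI)
    fix S S' assume S: "S \<in> cells V E" and S': "S' \<in> cells V E" and ne: "S \<noteq> S'"
    show "Ds S \<inter> Ds S' = {}"
      using cells_disj[OF assms(1,2) S S' ne] DsI[OF S] DsI[OF S'] by blast
  qed
next
  assume "\<forall>S\<in>cells V E. weak_frieze S (Ds S) (fs S)"
    "\<forall>S\<in>cells V E. \<forall>S'\<in>cells V E. \<forall>d\<in>diags S \<inter> diags S'. fs S d = fs S' d"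
  then show "\<exists>!f. f \<in> extensional (diags V)
                 \<and> weak_frieze V (E \<union> (\<Union>S\<in>cells V E. Ds S)) f
                 \<and> (\<forall>S\<in>cells V E. \<forall>d\<in>diags S. f d = fs S d)"
    by (rule frieze_ex[OF assms])
qed

end
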